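(* Let $B$ be the open unit disk. Let $\Phi:\partial B\to\gamma$ be an orientation preserving $C^1$ diffeomorphism onto a simple closed curve $\gamma$, $D$ the bounded domain with $\partial D=\gamma$, and $U\in C^2(B;\mathbb R^2)\cap C(\overline B;\mathbb R^2)$ the solution of $\Delta U=0$ in $B$, $U=\Phi$ on $\partial B$, and assume $U\in C^1(\overline B;\mathbb R^2)$. Then $\det DU>0$ everywhere on $\Phi^{-1}(\gamma_c)$.
   Context: With $\mathrm{co}(D)$ the convex hull of $D$, the convex part of $\partial D$ is the closed set $\gamma_c=\partial D\cap\partial(\mathrm{co}(D))$. *)

theory Defs
  imports "HOL-Complex_Analysis.Complex_Analysis"
begin

text \<open>We identify R^2 with \<complex> (x + i y). Real-linear maps complex \<Rightarrow> complex play the role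
of 2x2 real matrices.\<close>

definition jac_det :: "(complex \<Rightarrow> complex) \<Rightarrow> real" where
  "jac_det L = Re (L 1) * Im (L \<i>) - Im (L 1) * Re (L \<i>)"

definition harmonic_on :: "(complex \<Rightarrow> real) \<Rightarrow> complex set \<Rightarrow> bool" where
  "harmonic_on u S \<longleftrightarrow>
     (\<exists>u' u''. (\<forall>z\<in>S. (u has_derivative u' z) (at z)) \<and>
        (\<forall>z\<in>S. \<forall>v. ((\<lambda>w. u' w v) has_derivative u'' z v) (at z)) \<and>
        (\<forall>v w. continuous_on S (\<lambda>z. u'' z v w)) \<and>
        (\<forall>z\<in>S. u'' z 1 1 + u'' z \<i> \<i> = 0))"

definition convex_part :: "complex set \<Rightarrow> complex set" where
  "convex_part D = frontier D \<inter> frontier (convex hull D)"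

end

theory Submission
  imports Defs
begin

lemma second_deriv_max:
  fixes v :: "complex \<Rightarrow> real"
  assumes r: "r > 0"
   and d1: "\<And>w. w \<in> ball z r \<Longrightarrow> (v has_derivative v' w) (at w)"
   and d2: "((\<lambda>w. v' w e) has_derivative D2) (at z)"
   and mx: "\<And>w. w \<in> ball z r \<Longrightarrow> v w \<le> v z"
  shows "D2 e \<le> 0"
proof (rule ccontr)
  assume neg: "\<not> D2 e \<le> 0"
  have lin2: "linear D2" using d2 has_derivative_linear by blast
  have "v' z = (\<lambda>h. 0)"
  proof (rule has_derivative_local_max)
    show "(v has_derivative v' z) (at z)" using d1 r by simp
    show "\<forall>\<^sub>F y in at z. v y \<le> v z"
      by (rule eventually_mono[OF eventually_at_ball[OF r, of z UNIV]]) (use mx in auto)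
  qed
  then have k0: "v' z e = 0" by simp
  define k where "k = (\<lambda>t::real. v' (z + t *\<^sub>R e) e)"
  have kd: "(k has_real_derivative D2 e) (at 0)"
  proof -
    have "((\<lambda>t. z + t *\<^sub>R e) has_derivative (\<lambda>t. t *\<^sub>R e)) (at 0)"
      by (auto intro!: derivative_eq_intros)
    then have "((\<lambda>t. v' (z + t *\<^sub>R e) e) has_derivative (\<lambda>t. D2 (t *\<^sub>R e))) (at 0)"
      using has_derivative_compose[of "\<lambda>t. z + t *\<^sub>R e" _ 0 UNIV "\<lambda>w. v' w e" D2] d2 by simp
    moreover have "(\<lambda>t. D2 (t *\<^sub>R e)) = (*) (D2 e)"
      using linear_scale[OF lin2] by (auto simp: fun_eq_iff)
    ultimately show ?thesis by (simp add: k_def has_field_derivative_def)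
  qed
  obtain d where d: "d > 0" "\<And>h. h > 0 \<Longrightarrow> h < d \<Longrightarrow> k 0 < k (0 + h)"
    using DERIV_pos_inc_right[OF kd] neg by force
  define t1 where "t1 = min (d/2) (r / (2 * norm e + 1))"
  have "r / (2 * norm e + 1) > 0" using r by (simp add: add_nonneg_pos)
  then have t1: "t1 > 0" "t1 < d" using d r by (auto simp: t1_def)
  have t1e: "t1 * norm e < r"
  proof -
    have "t1 * norm e \<le> r / (2 * norm e + 1) * norm e"
      by (rule mult_right_mono) (auto simp: t1_def)
    also have "\<dots> = r * (norm e / (2 * norm e + 1))" by simp
    also have "\<dots> < r * 1"
      by (rule mult_strict_left_mono) (use r in \<open>auto simp: divide_less_eq add_nonneg_pos\<close>)
    finally have "t1 * norm e < r * 1" .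
    then show ?thesis by simp
  qed
  have inb: "z + t *\<^sub>R e \<in> ball z r" if "0 \<le> t" "t \<le> t1" for t
  proof -
    have "norm (t *\<^sub>R e) = t * norm e" using that by simp
    also have "\<dots> \<le> t1 * norm e" using that by (simp add: mult_right_mono)
    finally show ?thesis using t1e by (simp add: dist_norm)
  qed
  define g where "g = (\<lambda>t::real. v (z + t *\<^sub>R e))"
  have gd: "DERIV g t :> k t" if "0 \<le> t" "t \<le> t1" for t
  proof -
    have lin1: "linear (v' (z + t *\<^sub>R e))" using d1[OF inb[OF that]] has_derivative_linear by blast
    have "((\<lambda>s. z + s *\<^sub>R e) has_derivative (\<lambda>s. s *\<^sub>R e)) (at t)"
      by (auto intro!: derivative_eq_intros)
    then have "(g has_derivative (\<lambda>s. v' (z + t *\<^sub>R e) (s *\<^sub>R e))) (at t)"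
      using has_derivative_compose[of "\<lambda>s. z + s *\<^sub>R e" _ t UNIV v] d1[OF inb[OF that]]
      by (simp add: g_def)
    moreover have "(\<lambda>s. v' (z + t *\<^sub>R e) (s *\<^sub>R e)) = (*) (k t)"
      using linear_scale[OF lin1] by (auto simp: fun_eq_iff k_def)
    ultimately show ?thesis by (simp add: has_field_derivative_def)
  qed
  obtain \<xi> where xi: "\<xi> > 0" "\<xi> < t1" "g t1 - g 0 = (t1 - 0) * k \<xi>"
    using MVT2[of 0 t1 g k] gd t1 by auto
  have "k \<xi> > 0" using d(2)[of \<xi>] xi t1 k0 by (simp add: k_def)
  then have "g t1 > g 0" using xi t1 by (smt (verit) mult_pos_pos)
  moreover have "g t1 \<le> g 0" using mx[OF inb[of t1]] t1 by (simp add: g_def)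
  ultimately show False by simp
qed

lemma max_principle_strict:
  fixes v :: "complex \<Rightarrow> real"
  assumes K: "compact K" and S: "open S" "S \<subseteq> K" and vc: "continuous_on K v"
   and d1: "\<And>z. z \<in> S \<Longrightarrow> (v has_derivative v' z) (at z)"
   and d2: "\<And>z e. z \<in> S \<Longrightarrow> ((\<lambda>w. v' w e) has_derivative v'' z e) (at z)"
   and lap: "\<And>z. z \<in> S \<Longrightarrow> v'' z 1 1 + v'' z \<i> \<i> > 0"
   and bd: "\<And>z. z \<in> K \<Longrightarrow> z \<notin> S \<Longrightarrow> v z \<le> 0"
   and z: "z \<in> K"
  shows "v z \<le> 0"
proof -
  obtain m where m: "m \<in> K" "\<And>y. y \<in> K \<Longrightarrow> v y \<le> v m"
    using continuous_attains_sup[OF K _ vc] z by blast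
  show ?thesis
  proof (cases "m \<in> S")
    case True
    obtain r where r: "r > 0" "ball m r \<subseteq> S" using S True open_contains_ball by blast
    have mb: "v w \<le> v m" if "w \<in> ball m r" for w using that r S m by blast
    have a: "v'' m 1 1 \<le> 0"
      by (rule second_deriv_max[OF r(1), of m v v' 1 "v'' m 1"]) (use r d1 d2 mb S True in auto)
    have b: "v'' m \<i> \<i> \<le> 0"
      by (rule second_deriv_max[OF r(1), of m v v' \<i> "v'' m \<i>"]) (use r d1 d2 mb S True in auto)
    show ?thesis using a b lap[OF True] by simp
  next
    case False
    then show ?thesis using bd m z by fastforce
  qed
qed

lemma inner_sq_deriv:
  fixes c :: complex
  shows "((\<lambda>y. (y - c) \<bullet> (y - c)) has_derivative (\<lambda>e. 2 * ((z - c) \<bullet> e))) (at z)"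
  by (auto intro!: derivative_eq_intros simp: inner_commute)

lemma inner_lin_deriv:
  fixes c :: complex
  shows "((\<lambda>y. (y - c) \<bullet> e) has_derivative (\<lambda>f. f \<bullet> e)) (at z)"
  by (auto intro!: derivative_eq_intros)

lemma weak_max:
  fixes h :: "complex \<Rightarrow> real"
  assumes R: "R > 0" and hc: "continuous_on (cball c R) h"
   and d1: "\<And>z. z \<in> ball c R \<Longrightarrow> (h has_derivative h' z) (at z)"
   and d2: "\<And>z e. z \<in> ball c R \<Longrightarrow> ((\<lambda>w. h' w e) has_derivative h'' z e) (at z)"
   and lap: "\<And>z. z \<in> ball c R \<Longrightarrow> h'' z 1 1 + h'' z \<i> \<i> \<ge> 0"
   and bd: "\<And>z. z \<in> sphere c R \<Longrightarrow> h z \<le> 0"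
   and z: "z \<in> cball c R"
  shows "h z \<le> 0"
proof (rule ccontr)
  assume "\<not> h z \<le> 0"
  then have hz: "h z > 0" by simp
  define \<eta> where "\<eta> = h z / (2 * R\<^sup>2)"
  have eta: "\<eta> > 0" using hz R by (simp add: \<eta>_def)
  define v where "v = (\<lambda>y. h y + \<eta> * ((y - c) \<bullet> (y - c) - R\<^sup>2))"
  have "v z \<le> 0"
  proof (rule max_principle_strict[of "cball c R" "ball c R" v
        "\<lambda>y e. h' y e + \<eta> * (2 * ((y - c) \<bullet> e))"
        "\<lambda>y e f. h'' y e f + \<eta> * (2 * (f \<bullet> e))"])
    show "continuous_on (cball c R) v"
      unfolding v_def by (intro continuous_intros hc)
    show "(v has_derivative (\<lambda>e. h' y e + \<eta> * (2 * ((y - c) \<bullet> e)))) (at y)" if "y \<in> ball c R" for y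
      unfolding v_def using d1[OF that]
      by (auto intro!: derivative_eq_intros simp: inner_commute fun_eq_iff)
    show "((\<lambda>w. h' w e + \<eta> * (2 * ((w - c) \<bullet> e))) has_derivative
           (\<lambda>f. h'' y e f + \<eta> * (2 * (f \<bullet> e)))) (at y)" if "y \<in> ball c R" for y e
      using d2[OF that, of e] inner_lin_deriv[of c e y]
      by (auto intro!: derivative_eq_intros)
    show "0 < h'' y 1 1 + \<eta> * (2 * ((1::complex) \<bullet> 1)) + (h'' y \<i> \<i> + \<eta> * (2 * (\<i> \<bullet> \<i>)))"
      if "y \<in> ball c R" for y
      using lap[OF that] eta by simp
    show "v y \<le> 0" if "y \<in> cball c R" "y \<notin> ball c R" for y
    proof -
      have "y \<in> sphere c R" using that by auto
      then have "(y - c) \<bullet> (y - c) = R\<^sup>2"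
        by (simp add: power2_norm_eq_inner[symmetric] dist_norm norm_minus_commute)
      then show ?thesis using bd[OF \<open>y \<in> sphere c R\<close>] by (simp add: v_def)
    qed
  qed (use z in auto)
  then have a: "h z + (\<eta> * ((z - c) \<bullet> (z - c)) - \<eta> * R\<^sup>2) \<le> 0"
    by (simp add: v_def right_diff_distrib)
  have "\<eta> * ((z - c) \<bullet> (z - c)) \<ge> 0" using eta by simp
  with a have "h z \<le> \<eta> * R\<^sup>2" by linarith
  also have "\<dots> = h z / 2" using R by (simp add: \<eta>_def)
  finally show False using hz by simp
qed

lemma barrier_d1:
  fixes c :: complex and R :: real
  assumes "R \<noteq> 0"
  shows "((\<lambda>y. (R\<^sup>2 - (y - c) \<bullet> (y - c)) + (R\<^sup>2 - (y - c) \<bullet> (y - c))\<^sup>2 / R\<^sup>2) has_derivative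
          (\<lambda>e. (1 + 2 * (R\<^sup>2 - (z - c) \<bullet> (z - c)) / R\<^sup>2) * (-2 * ((z - c) \<bullet> e)))) (at z)"
  using assms by (auto intro!: derivative_eq_intros simp: fun_eq_iff inner_commute field_simps power2_eq_square)

lemma barrier_d2:
  fixes c :: complex and R :: real
  assumes "R \<noteq> 0"
  shows "((\<lambda>y. (1 + 2 * (R\<^sup>2 - (y - c) \<bullet> (y - c)) / R\<^sup>2) * (-2 * ((y - c) \<bullet> e))) has_derivative
          (\<lambda>f. (2 * (-2 * ((z - c) \<bullet> f)) / R\<^sup>2) * (-2 * ((z - c) \<bullet> e))
               + (1 + 2 * (R\<^sup>2 - (z - c) \<bullet> (z - c)) / R\<^sup>2) * (-2 * (f \<bullet> e)))) (at z)"
  using assms by (auto intro!: derivative_eq_intros simp: fun_eq_iff inner_commute field_simps power2_eq_square)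

lemma barrier_lap:
  fixes c y :: complex and R :: real
  assumes "R > 0"
  shows "((2 * (-2 * ((y - c) \<bullet> 1)) / R\<^sup>2) * (-2 * ((y - c) \<bullet> 1))
               + (1 + 2 * (R\<^sup>2 - (y - c) \<bullet> (y - c)) / R\<^sup>2) * (-2 * ((1::complex) \<bullet> 1)))
       + ((2 * (-2 * ((y - c) \<bullet> \<i>)) / R\<^sup>2) * (-2 * ((y - c) \<bullet> \<i>))
               + (1 + 2 * (R\<^sup>2 - (y - c) \<bullet> (y - c)) / R\<^sup>2) * (-2 * (\<i> \<bullet> \<i>)))
       = 16 * ((y - c) \<bullet> (y - c)) / R\<^sup>2 - 12"
  using assms by (simp add: inner_complex_def field_simps power2_eq_square)

lemma hopf:
  fixes h :: "complex \<Rightarrow> real"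
  assumes R: "R > 0" and hc: "continuous_on (cball c R) h"
   and d1: "\<And>z. z \<in> ball c R \<Longrightarrow> (h has_derivative h' z) (at z)"
   and d2: "\<And>z e. z \<in> ball c R \<Longrightarrow> ((\<lambda>w. h' w e) has_derivative h'' z e) (at z)"
   and lap: "\<And>z. z \<in> ball c R \<Longrightarrow> h'' z 1 1 + h'' z \<i> \<i> \<ge> 0"
   and neg: "\<And>z. z \<in> ball c R \<Longrightarrow> h z < 0"
   and bd: "\<And>z. z \<in> sphere c R \<Longrightarrow> h z \<le> 0"
   and x0: "x0 \<in> sphere c R"
  shows "\<exists>\<delta>>0. \<forall>t. 0 < t \<and> t \<le> 1/10 \<longrightarrow> h (x0 + t *\<^sub>R (c - x0)) \<le> - \<delta> * t"
proof -
  define r where "r = 9/10 * R"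
  have r: "r > 0" "r < R" using R by (auto simp: r_def)
  have sne: "sphere c r \<noteq> {}" using r by (simp add: sphere_eq_empty)
  have hcs: "continuous_on (sphere c r) h"
    by (rule continuous_on_subset[OF hc]) (use r in auto)
  obtain y1 where y1: "y1 \<in> sphere c r" "\<And>y. y \<in> sphere c r \<Longrightarrow> h y \<le> h y1"
    using continuous_attains_sup[OF compact_sphere sne hcs] by blast
  define M where "M = - h y1"
  have M: "M > 0" using neg[of y1] y1 r by (auto simp: M_def)
  define \<epsilon> where "\<epsilon> = M / R\<^sup>2"
  have eps: "\<epsilon> > 0" using M R by (simp add: \<epsilon>_def)
  define q where "q = (\<lambda>y. R\<^sup>2 - (y - c) \<bullet> (y - c))"
  define v where "v = (\<lambda>y. h y + \<epsilon> * (q y + (q y)\<^sup>2 / R\<^sup>2))"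
  define K where "K = cball c R - ball c r"
  define S where "S = ball c R - cball c r"
  have qn: "q y = R\<^sup>2 - (norm (y - c))\<^sup>2" for y
    by (simp add: q_def power2_norm_eq_inner)
  have vK: "v y \<le> 0" if "y \<in> K" for y
  proof (rule max_principle_strict[of K S v
        "\<lambda>y e. h' y e + \<epsilon> * ((1 + 2 * (R\<^sup>2 - (y - c) \<bullet> (y - c)) / R\<^sup>2) * (-2 * ((y - c) \<bullet> e)))"
        "\<lambda>y e f. h'' y e f + \<epsilon> * ((2 * (-2 * ((y - c) \<bullet> f)) / R\<^sup>2) * (-2 * ((y - c) \<bullet> e))
               + (1 + 2 * (R\<^sup>2 - (y - c) \<bullet> (y - c)) / R\<^sup>2) * (-2 * (f \<bullet> e)))"])
    show "compact K" unfolding K_def by (intro compact_diff compact_cball open_ball)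
    show "open S" unfolding S_def by (intro open_Diff open_ball closed_cball)
    show "S \<subseteq> K" unfolding S_def K_def by auto
    show "continuous_on K v" unfolding v_def q_def
      by (intro continuous_intros continuous_on_subset[OF hc]) (use r R in \<open>auto simp: K_def\<close>)
    show "(v has_derivative (\<lambda>e. h' y e + \<epsilon> * ((1 + 2 * (R\<^sup>2 - (y - c) \<bullet> (y - c)) / R\<^sup>2) * (-2 * ((y - c) \<bullet> e))))) (at y)"
      if "y \<in> S" for y
    proof -
      have "y \<in> ball c R" using that by (auto simp: S_def)
      then show ?thesis unfolding v_def q_def
        using has_derivative_add[OF d1[OF \<open>y \<in> ball c R\<close>] has_derivative_mult_right[OF barrier_d1[of R c y], of \<epsilon>]] R by simp
    qed
    show "((\<lambda>w. h' w e + \<epsilon> * ((1 + 2 * (R\<^sup>2 - (w - c) \<bullet> (w - c)) / R\<^sup>2) * (-2 * ((w - c) \<bullet> e)))) has_derivative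
         (\<lambda>f. h'' y e f + \<epsilon> * ((2 * (-2 * ((y - c) \<bullet> f)) / R\<^sup>2) * (-2 * ((y - c) \<bullet> e))
               + (1 + 2 * (R\<^sup>2 - (y - c) \<bullet> (y - c)) / R\<^sup>2) * (-2 * (f \<bullet> e))))) (at y)"
      if "y \<in> S" for y e
    proof -
      have "y \<in> ball c R" using that by (auto simp: S_def)
      then show ?thesis
        using has_derivative_add[OF d2[OF \<open>y \<in> ball c R\<close>, of e] has_derivative_mult_right[OF barrier_d2[of R c e y], of \<epsilon>]] R by simp
    qed
    show "0 < h'' y 1 1 + \<epsilon> * ((2 * (-2 * ((y - c) \<bullet> 1)) / R\<^sup>2) * (-2 * ((y - c) \<bullet> 1))
               + (1 + 2 * (R\<^sup>2 - (y - c) \<bullet> (y - c)) / R\<^sup>2) * (-2 * ((1::complex) \<bullet> 1))) +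
             (h'' y \<i> \<i> + \<epsilon> * ((2 * (-2 * ((y - c) \<bullet> \<i>)) / R\<^sup>2) * (-2 * ((y - c) \<bullet> \<i>))
               + (1 + 2 * (R\<^sup>2 - (y - c) \<bullet> (y - c)) / R\<^sup>2) * (-2 * (\<i> \<bullet> \<i>))))"
      (is "0 < ?h1 + \<epsilon> * ?A + (?h2 + \<epsilon> * ?B)")
      if "y \<in> S" for y
    proof -
      have yb: "y \<in> ball c R" using that by (auto simp: S_def)
      have "norm (y - c) > r" using that by (auto simp: S_def dist_norm norm_minus_commute)
      then have "(norm (y - c))\<^sup>2 > r\<^sup>2" using r by (simp add: power_strict_mono)
      then have "(y - c) \<bullet> (y - c) > 81/100 * R\<^sup>2"
        by (simp add: power2_norm_eq_inner r_def power_divide power_mult_distrib)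
      moreover have "R\<^sup>2 > 0" using R by simp
      ultimately have "3 * R\<^sup>2 < 4 * ((y - c) \<bullet> (y - c))" "R\<^sup>2 > 0" by linarith+
      then have "16 * ((y - c) \<bullet> (y - c)) / R\<^sup>2 - 12 > 0"
        by (simp add: field_simps)
      then have "\<epsilon> * (16 * ((y - c) \<bullet> (y - c)) / R\<^sup>2 - 12) > 0" using eps by simp
      moreover have "h'' y 1 1 + h'' y \<i> \<i> \<ge> 0" using lap[OF yb] .
      moreover have "?A + ?B = 16 * ((y - c) \<bullet> (y - c)) / R\<^sup>2 - 12"
        by (rule barrier_lap[OF R])
      then have "\<epsilon> * ?A + \<epsilon> * ?B = \<epsilon> * (16 * ((y - c) \<bullet> (y - c)) / R\<^sup>2 - 12)"
        by (simp only: distrib_left[symmetric])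
      ultimately show ?thesis by linarith
    qed
    show "v y \<le> 0" if "y \<in> K" "y \<notin> S" for y
    proof -
      have "norm (y - c) = R \<or> norm (y - c) = r"
        using that by (auto simp: K_def S_def dist_norm norm_minus_commute)
      then show ?thesis
      proof
        assume "norm (y - c) = R"
        then have "q y = 0" "y \<in> sphere c R" by (auto simp: qn dist_norm norm_minus_commute)
        then show ?thesis using bd by (simp add: v_def)
      next
        assume a: "norm (y - c) = r"
        then have ys: "y \<in> sphere c r" by (auto simp: dist_norm norm_minus_commute)
        have "q y = R\<^sup>2 - r\<^sup>2" by (simp add: qn a)
        also have "\<dots> = 19/100 * R\<^sup>2" by (simp add: r_def power_mult_distrib power_divide)
        finally have qy: "q y = 19/100 * R\<^sup>2" .
        have ww: "q y + (q y)\<^sup>2 / R\<^sup>2 = 2261/10000 * R\<^sup>2"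
          unfolding qy using R by (simp add: field_simps power2_eq_square)
        have "\<epsilon> * (q y + (q y)\<^sup>2 / R\<^sup>2) = 2261/10000 * M"
          unfolding ww using R by (simp add: \<epsilon>_def)
        moreover have "h y \<le> - M" using y1(2)[OF ys] by (simp add: M_def)
        ultimately show ?thesis using M by (simp add: v_def)
      qed
    qed
  qed (use that in auto)
  show ?thesis
  proof (intro exI[of _ M] conjI allI impI M)
    fix t :: real
    assume t: "0 < t \<and> t \<le> 1/10"
    define z where "z = x0 + t *\<^sub>R (c - x0)"
    have zc: "z - c = (1 - t) *\<^sub>R (x0 - c)" by (simp add: z_def algebra_simps)
    have nx: "norm (x0 - c) = R" using x0 by (simp add: dist_norm norm_minus_commute)
    have nz: "norm (z - c) = (1 - t) * R" using t by (simp add: zc nx)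
    have "z \<in> K" using nz t r R
      by (auto simp: K_def dist_norm norm_minus_commute r_def mult_right_mono intro!: mult_left_le_one_le)
    then have "v z \<le> 0" by (rule vK)
    have qz: "q z = R\<^sup>2 * (2 * t - t\<^sup>2)" by (simp add: qn nz power_mult_distrib algebra_simps power2_eq_square)
    have "q z \<ge> R\<^sup>2 * t"
    proof -
      have "2 * t - t\<^sup>2 \<ge> t" using t by (simp add: power2_eq_square)
      then show ?thesis unfolding qz by (simp add: mult_left_mono)
    qed
    then have "\<epsilon> * (q z + (q z)\<^sup>2 / R\<^sup>2) \<ge> \<epsilon> * (R\<^sup>2 * t)"
      using eps R by (intro mult_left_mono) (auto intro!: add_increasing2)
    also have "\<epsilon> * (R\<^sup>2 * t) = M * t" using R by (simp add: \<epsilon>_def)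
    finally show "h (x0 + t *\<^sub>R (c - x0)) \<le> - M * t"
      using \<open>v z \<le> 0\<close> by (simp add: v_def z_def)
  qed
qed

lemma deriv_from_bound:
  fixes g :: "real \<Rightarrow> real"
  assumes gd: "(g has_real_derivative D) (at 0 within {0..1})" and g0: "g 0 = 0"
    and \<tau>: "\<tau> > 0" and bd: "\<And>t. 0 < t \<Longrightarrow> t \<le> \<tau> \<Longrightarrow> g t \<le> -\<delta> * t"
  shows "D \<le> -\<delta>"
proof -
  have lim: "((\<lambda>y. (g y - g 0) / (y - 0)) \<longlongrightarrow> D) (at_right 0)"
    using gd unfolding has_field_derivative_iff by (simp add: at_within_Icc_at_right)
  have ev: "eventually (\<lambda>y. (g y - g 0) / (y - 0) \<le> -\<delta>) (at_right (0::real))"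
  proof -
    have "eventually (\<lambda>y. 0 < y \<and> y < min \<tau> 1) (at_right (0::real))"
      using eventually_at_right[of 0 "min \<tau> 1"] \<tau> by (auto intro!: exI[of _ "min \<tau> 1"])
    then show ?thesis
    proof (rule eventually_mono)
      fix y :: real assume y: "0 < y \<and> y < min \<tau> 1"
      then have "g y \<le> -\<delta> * y" using bd by auto
      then show "(g y - g 0) / (y - 0) \<le> -\<delta>" using y g0 by (simp add: divide_le_eq)
    qed
  qed
  show ?thesis by (rule tendsto_upperbound[OF lim ev]) (simp add: trivial_limit_at_right_real)
qed

lemma strong_max:
  fixes h :: "complex \<Rightarrow> real"
  assumes hc: "continuous_on (cball 0 1) h"
   and d1: "\<And>z. z \<in> ball 0 1 \<Longrightarrow> (h has_derivative h' z) (at z)"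
   and d2: "\<And>z e. z \<in> ball 0 1 \<Longrightarrow> ((\<lambda>w. h' w e) has_derivative h'' z e) (at z)"
   and lap: "\<And>z. z \<in> ball 0 1 \<Longrightarrow> h'' z 1 1 + h'' z \<i> \<i> \<ge> 0"
   and le: "\<And>z. z \<in> cball 0 1 \<Longrightarrow> h z \<le> 0"
   and zeta: "\<zeta> \<in> cball 0 1" "h \<zeta> < 0"
   and x1: "x1 \<in> ball 0 1"
  shows "h x1 < 0"
proof (rule ccontr)
  assume "\<not> h x1 < 0"
  moreover have "h x1 \<le> 0" using le x1 by auto
  ultimately have hx1: "h x1 = 0" by linarith
  define Z where "Z = {x \<in> ball 0 1. h x = 0}"
  have "\<exists>x\<in>Z. \<forall>e>0. \<exists>y\<in>ball x e. y \<in> ball 0 1 \<and> h y \<noteq> 0"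
  proof (rule ccontr)
    assume "\<not> ?thesis"
    then have loc: "\<forall>x\<in>Z. \<exists>e>0. \<forall>y\<in>ball x e. y \<in> ball 0 1 \<longrightarrow> h y = 0" by blast
    have "open Z"
    unfolding open_contains_ball
    proof (intro ballI)
      fix x assume xZ: "x \<in> Z"
      obtain e where e: "e > 0" "\<forall>y\<in>ball x e. y \<in> ball 0 1 \<longrightarrow> h y = 0" using loc xZ by blast
      obtain e2 where e2: "e2 > 0" "ball x e2 \<subseteq> ball 0 1"
      proof -
        have "x \<in> ball 0 1" using xZ by (simp add: Z_def)
        then show ?thesis by (rule openE[OF open_ball]) (rule that)
      qed
      show "\<exists>r>0. ball x r \<subseteq> Z"
        by (rule exI[of _ "min e e2"]) (use e e2 in \<open>auto simp: Z_def\<close>)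
    qed
    then have op: "openin (top_of_set (ball 0 1)) Z" by (intro open_subset) (auto simp: Z_def)
    have hcb: "continuous_on (ball 0 1) h" by (rule continuous_on_subset[OF hc]) auto
    have cl: "closedin (top_of_set (ball 0 1)) Z"
      unfolding Z_def by (rule continuous_closedin_preimage_constant[OF hcb])
    have "Z = {} \<or> Z = ball 0 1"
    proof -
      have "connected (ball (0::complex) 1)" by simp
      then show ?thesis using op cl unfolding connected_clopen by blast
    qed
    moreover have "Z \<noteq> {}" using hx1 x1 by (auto simp: Z_def)
    ultimately have "Z = ball 0 1" by simp
    then have "\<And>x. x \<in> ball 0 1 \<Longrightarrow> h x = 0" unfolding Z_def by blast
    moreover have hcl: "continuous_on (closure (ball (0::complex) 1)) h" using hc by simp
    moreover have "\<zeta> \<in> closure (ball 0 1)" using zeta by simp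
    ultimately have "h \<zeta> = 0" using continuous_constant_on_closure[of "ball 0 1" h 0 \<zeta>] by blast
    then show False using zeta by simp
  qed
  then obtain x where xZ: "x \<in> Z" and nb: "\<And>e. e > 0 \<Longrightarrow> \<exists>y\<in>ball x e. y \<in> ball 0 1 \<and> h y \<noteq> 0"
    by blast
  define \<kappa> where "\<kappa> = (1 - norm x) / 2"
  have kap: "\<kappa> > 0" using xZ by (auto simp: Z_def \<kappa>_def)
  have cbsub: "cball x \<kappa> \<subseteq> ball 0 1"
  proof
    fix u assume "u \<in> cball x \<kappa>"
    then have "norm (u - x) \<le> \<kappa>" by (simp add: dist_norm norm_minus_commute)
    moreover have "norm u \<le> norm x + norm (u - x)" by (metis add.commute diff_add_cancel norm_triangle_ineq)
    ultimately show "u \<in> ball 0 1" using kap by (simp add: \<kappa>_def)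
  qed
  obtain y where y: "y \<in> ball x (\<kappa>/2)" "y \<in> ball 0 1" "h y \<noteq> 0" using nb[of "\<kappa>/2"] kap by auto
  have "h y \<le> 0" using le[of y] y by auto
  then have hy: "h y < 0" using y by linarith
  define Z' where "Z' = {u \<in> cball x \<kappa>. h u = 0}"
  have hck: "continuous_on (cball x \<kappa>) h" by (rule continuous_on_subset[OF hc]) (use cbsub in auto)
  have "closedin (top_of_set (cball x \<kappa>)) Z'"
    unfolding Z'_def by (rule continuous_closedin_preimage_constant[OF hck])
  then have clZ': "closed Z'" using closedin_closed_trans closed_cball by blast
  have xZ': "x \<in> Z'" using xZ kap by (auto simp: Z_def Z'_def)
  obtain x0 where x0: "x0 \<in> Z'" "\<And>u. u \<in> Z' \<Longrightarrow> dist y x0 \<le> dist y u"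
    using distance_attains_inf[OF clZ', of y] xZ' by blast
  define \<rho> where "\<rho> = dist y x0"
  have rho_le: "\<rho> \<le> dist y x" using x0(2)[OF xZ'] by (simp add: \<rho>_def)
  have rho_pos: "\<rho> > 0" using x0 y hy by (auto simp: \<rho>_def Z'_def)
  have yx: "dist x y < \<kappa>/2" using y by simp
  have cb2: "cball y \<rho> \<subseteq> cball x \<kappa>"
  proof
    fix u assume "u \<in> cball y \<rho>"
    then have "dist y u \<le> \<rho>" by simp
    then have "dist x u \<le> dist x y + \<rho>" using dist_triangle[of x u y] by linarith
    then show "u \<in> cball x \<kappa>" using rho_le yx by (simp add: dist_commute)
  qed
  have negb: "h u < 0" if "u \<in> ball y \<rho>" for u
  proof -
    have "u \<in> cball y \<rho>" using that by simp
    then have uc: "u \<in> cball x \<kappa>" using cb2 by blast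
    have "h u \<noteq> 0"
    proof
      assume "h u = 0"
      then have "u \<in> Z'" using uc by (simp add: Z'_def)
      then have "dist y x0 \<le> dist y u" by (rule x0(2))
      then show False using that by (simp add: \<rho>_def)
    qed
    moreover have "h u \<le> 0" using le cbsub uc by auto
    ultimately show ?thesis by simp
  qed
  have bsub: "ball y \<rho> \<subseteq> ball 0 1" using cb2 cbsub ball_subset_cball by blast
  have csub: "cball y \<rho> \<subseteq> ball 0 1" using cb2 cbsub by blast
  have x0s: "x0 \<in> sphere y \<rho>" by (simp add: \<rho>_def)
  have x0b: "x0 \<in> ball 0 1" using x0 cbsub by (auto simp: Z'_def)
  have hx0: "h x0 = 0" using x0 by (simp add: Z'_def)
  obtain \<delta> where dl: "\<delta> > 0" "\<And>t. 0 < t \<and> t \<le> 1/10 \<Longrightarrow> h (x0 + t *\<^sub>R (y - x0)) \<le> - \<delta> * t"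
  proof -
    have "\<exists>\<delta>>0. \<forall>t. 0 < t \<and> t \<le> 1/10 \<longrightarrow> h (x0 + t *\<^sub>R (y - x0)) \<le> - \<delta> * t"
    proof (rule hopf[OF rho_pos _ _ _ _ negb _ x0s])
      show "continuous_on (cball y \<rho>) h" by (rule continuous_on_subset[OF hck cb2])
      show "(h has_derivative h' z) (at z)" if "z \<in> ball y \<rho>" for z
        using d1 that bsub by blast
      show "((\<lambda>w. h' w e) has_derivative h'' z e) (at z)" if "z \<in> ball y \<rho>" for z e
        using d2 that bsub by blast
      show "h'' z 1 1 + h'' z \<i> \<i> \<ge> 0" if "z \<in> ball y \<rho>" for z
        using lap that bsub by blast
      show "h z \<le> 0" if "z \<in> sphere y \<rho>" for z
        using le that csub by auto
    qed
    then show ?thesis using that by blast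
  qed
  have h'0: "h' x0 = (\<lambda>v. 0)"
  proof (rule has_derivative_local_max[OF d1[OF x0b]])
    show "\<forall>\<^sub>F u in at x0. h u \<le> h x0"
    proof -
      obtain r where r: "r > 0" "ball x0 r \<subseteq> ball 0 1" by (rule openE[OF open_ball x0b])
      show ?thesis
        by (rule eventually_mono[OF eventually_at_ball[OF r(1), of x0 UNIV]]) (use r le hx0 in auto)
    qed
  qed
  define g where "g = (\<lambda>t::real. h (x0 + t *\<^sub>R (y - x0)))"
  have "(g has_derivative (\<lambda>t. h' x0 (t *\<^sub>R (y - x0)))) (at 0)"
  proof -
    have "((\<lambda>t::real. x0 + t *\<^sub>R (y - x0)) has_derivative (\<lambda>t. t *\<^sub>R (y - x0))) (at 0)"
      by (auto intro!: derivative_eq_intros)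
    then show ?thesis
      using has_derivative_compose[of "\<lambda>t::real. x0 + t *\<^sub>R (y - x0)" _ 0 UNIV h] d1[OF x0b]
      by (simp add: g_def)
  qed
  then have "(g has_real_derivative 0) (at 0 within {0..1})"
    by (simp add: h'0 has_field_derivative_def has_derivative_at_withinI lambda_zero)
  then have "0 \<le> -\<delta>"
    by (rule deriv_from_bound[where \<tau>="1/10"]) (use dl hx0 in \<open>auto simp: g_def\<close>)
  then show False using dl by simp
qed

lemma cis_eq_int:
  assumes "cis a = cis b"
  obtains n :: int where "a = b + 2 * pi * n"
proof -
  have "exp (\<i> * complex_of_real a) = exp (\<i> * complex_of_real b)" using assms by (simp add: cis_conv_exp)
  then obtain n :: int where n: "\<i> * complex_of_real a = \<i> * complex_of_real b + complex_of_real (of_int (2 * n) * pi) * \<i>"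
    unfolding exp_eq by blast
  have "Im (\<i> * complex_of_real a) = Im (\<i> * complex_of_real b + complex_of_real (of_int (2 * n) * pi) * \<i>)"
    using n by simp
  then have "a = b + 2 * pi * n" by simp
  then show ?thesis by (rule that)
qed

lemma wn_linepath_Ln:
  fixes A B z u :: complex
  assumes u: "u \<noteq> 0" and pa: "Re ((A - z) / u) > 0" and pb: "Re ((B - z) / u) > 0"
  shows "winding_number (linepath A B) z = (Ln ((B - z) / u) - Ln ((A - z) / u)) / (2 * pi * \<i>)"
proof -
  define S where "S = {\<zeta>. Re ((\<zeta> - z) / u) > 0}"
  have seg: "closed_segment A B \<subseteq> S"
  proof
    fix \<zeta> assume "\<zeta> \<in> closed_segment A B"
    then obtain x where x: "0 \<le> x" "x \<le> 1" "\<zeta> = (1 - x) *\<^sub>R A + x *\<^sub>R B"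
      unfolding closed_segment_def by auto
    have "(\<zeta> - z) / u = (1 - x) *\<^sub>R ((A - z) / u) + x *\<^sub>R ((B - z) / u)"
      using u by (simp add: x(3) scaleR_conv_of_real field_simps)
    then have "Re ((\<zeta> - z) / u) = (1 - x) * Re ((A - z) / u) + x * Re ((B - z) / u)" by simp
    moreover have "(1 - x) * Re ((A - z) / u) \<ge> 0" "x * Re ((B - z) / u) \<ge> 0"
      using x pa pb by auto
    moreover have "(1 - x) * Re ((A - z) / u) > 0 \<or> x * Re ((B - z) / u) > 0"
      using x pa pb by (cases "x = 1") auto
    ultimately show "\<zeta> \<in> S" by (auto simp: S_def)
  qed
  have zS: "z \<notin> S" by (simp add: S_def)
  have znot: "z \<notin> path_image (linepath A B)" using seg zS by auto
  have der: "((\<lambda>\<zeta>. Ln ((\<zeta> - z) / u)) has_field_derivative 1 / (\<zeta> - z)) (at \<zeta> within S)"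
    if "\<zeta> \<in> S" for \<zeta>
  proof -
    have re: "Re ((\<zeta> - z) / u) > 0" using that by (simp add: S_def)
    then have nn: "(\<zeta> - z) / u \<notin> \<real>\<^sub>\<le>\<^sub>0" by (auto simp: nonpos_Reals_def complex_nonpos_Reals_iff)
    have ne: "\<zeta> - z \<noteq> 0" using re by auto
    have d1: "((\<lambda>\<zeta>. (\<zeta> - z) / u) has_field_derivative 1 / u) (at \<zeta>)"
      using u by (auto intro!: derivative_eq_intros)
    have "((\<lambda>\<zeta>. Ln ((\<zeta> - z) / u)) has_field_derivative inverse ((\<zeta> - z) / u) * (1 / u)) (at \<zeta>)"
      by (rule DERIV_chain2[OF has_field_derivative_Ln[OF nn] d1])
    moreover have "inverse ((\<zeta> - z) / u) * (1 / u) = 1 / (\<zeta> - z)" using u ne by (simp add: field_simps)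
    ultimately show ?thesis by (simp add: has_field_derivative_at_within)
  qed
  have "((\<lambda>w. 1 / (w - z)) has_contour_integral (Ln ((B - z) / u) - Ln ((A - z) / u))) (linepath A B)"
    using contour_integral_primitive[OF der valid_path_linepath, of A B] seg by simp
  then have "contour_integral (linepath A B) (\<lambda>w. 1 / (w - z)) = Ln ((B - z) / u) - Ln ((A - z) / u)"
    by (rule contour_integral_unique)
  then show ?thesis
    using winding_number_valid_path[OF valid_path_linepath znot] by simp
qed

lemma harmonic_lin:
  assumes "harmonic_on f S" "harmonic_on g S"
  shows "harmonic_on (\<lambda>z. a * f z + b * g z + k) S"
proof -
  obtain f' f'' where f: "\<forall>z\<in>S. (f has_derivative f' z) (at z)"
     "\<forall>z\<in>S. \<forall>v. ((\<lambda>w. f' w v) has_derivative f'' z v) (at z)"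
     "\<forall>v w. continuous_on S (\<lambda>z. f'' z v w)" "\<forall>z\<in>S. f'' z 1 1 + f'' z \<i> \<i> = 0"
    using assms(1) unfolding harmonic_on_def by blast
  obtain g' g'' where g: "\<forall>z\<in>S. (g has_derivative g' z) (at z)"
     "\<forall>z\<in>S. \<forall>v. ((\<lambda>w. g' w v) has_derivative g'' z v) (at z)"
     "\<forall>v w. continuous_on S (\<lambda>z. g'' z v w)" "\<forall>z\<in>S. g'' z 1 1 + g'' z \<i> \<i> = 0"
    using assms(2) unfolding harmonic_on_def by blast
  show ?thesis unfolding harmonic_on_def
  proof (intro exI[of _ "\<lambda>z v. a * f' z v + b * g' z v"] exI[of _ "\<lambda>z v w. a * f'' z v w + b * g'' z v w"] conjI ballI allI)
    fix z assume z: "z \<in> S"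
    show "((\<lambda>z. a * f z + b * g z + k) has_derivative (\<lambda>v. a * f' z v + b * g' z v)) (at z)"
      using f(1) g(1) z by (auto intro!: derivative_eq_intros)
    fix v
    show "((\<lambda>w. a * f' w v + b * g' w v) has_derivative (\<lambda>w. a * f'' z v w + b * g'' z v w)) (at z)"
      using f(2) g(2) z by (auto intro!: derivative_eq_intros)
  next
    fix v w
    show "continuous_on S (\<lambda>z. a * f'' z v w + b * g'' z v w)"
      using f(3) g(3) by (auto intro!: continuous_intros)
  next
    fix z assume z: "z \<in> S"
    show "a * f'' z 1 1 + b * g'' z 1 1 + (a * f'' z \<i> \<i> + b * g'' z \<i> \<i>) = 0"
    proof -
      have "a * f'' z 1 1 + b * g'' z 1 1 + (a * f'' z \<i> \<i> + b * g'' z \<i> \<i>)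
          = a * (f'' z 1 1 + f'' z \<i> \<i>) + b * (g'' z 1 1 + g'' z \<i> \<i>)"
        by (simp add: algebra_simps)
      then show ?thesis using f(4) g(4) z by simp
    qed
  qed
qed

lemma jordan_part:
  assumes sp: "simple_path \<gamma>" and lp: "pathfinish \<gamma> = pathstart \<gamma>"
    and d: "d \<notin> path_image \<gamma>" "winding_number \<gamma> d = 1"
    and w: "w \<notin> path_image \<gamma>"
  shows "winding_number \<gamma> w \<in> {0, 1}"
proof -
  have pg: "path \<gamma>" using sp simple_path_imp_path by blast
  have cases: "winding_number \<gamma> w \<in> {-1, 0, 1}"
    by (rule simple_closed_path_winding_number_cases[OF sp lp w])
  have "winding_number \<gamma> w \<noteq> -1"
  proof
    assume wm: "winding_number \<gamma> w = -1"
    have wi: "w \<in> inside (path_image \<gamma>)"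
    proof (rule ccontr)
      assume "w \<notin> inside (path_image \<gamma>)"
      then have "w \<in> outside (path_image \<gamma>)" using w inside_Un_outside by blast
      then have "winding_number \<gamma> w = 0" using winding_number_zero_in_outside[OF pg lp] by blast
      then show False using wm by simp
    qed
    show False
    proof (rule simple_closed_path_winding_number_inside[OF sp])
      assume "\<And>z. z \<in> inside (path_image \<gamma>) \<Longrightarrow> winding_number \<gamma> z = 1"
      then show False using wi wm by force
    next
      assume all: "\<And>z. z \<in> inside (path_image \<gamma>) \<Longrightarrow> winding_number \<gamma> z = -1"
      show False
      proof (cases "d \<in> inside (path_image \<gamma>)")
        case True
        then show False using all d by force
      next
        case False
        then have "d \<in> outside (path_image \<gamma>)" using d inside_Un_outside by blast
        then have "winding_number \<gamma> d = 0" using winding_number_zero_in_outside[OF pg lp] by blast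
        then show False using d by simp
      qed
    qed
  qed
  then show ?thesis using cases by blast
qed

lemma cis_add_2pi: "cis (u + 2 * pi) = cis u"
  by (simp add: complex_eq_iff)

lemma gamma_simple:
  fixes \<Phi> :: "complex \<Rightarrow> complex"
  assumes cont: "continuous_on UNIV (\<lambda>t. \<Phi> (cis t))"
    and inj: "inj_on \<Phi> (sphere 0 1)"
  shows "simple_path (\<lambda>x. \<Phi> (cis (2 * pi * x)))"
    and "pathfinish (\<lambda>x. \<Phi> (cis (2 * pi * x))) = pathstart (\<lambda>x. \<Phi> (cis (2 * pi * x)))"
proof -
  have "continuous_on UNIV ((\<lambda>t. \<Phi> (cis t)) \<circ> (\<lambda>x. 2 * pi * x))"
    by (intro continuous_on_compose continuous_intros continuous_on_subset[OF cont]) auto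
  then have pth: "path (\<lambda>x. \<Phi> (cis (2 * pi * x)))"
    unfolding path_def by (auto simp: o_def intro: continuous_on_subset)
  have lf: "loop_free (\<lambda>x. \<Phi> (cis (2 * pi * x)))"
    unfolding loop_free_def
  proof (intro ballI impI)
    fix x y :: real assume x: "x \<in> {0..1}" and y: "y \<in> {0..1}"
      and eq: "\<Phi> (cis (2 * pi * x)) = \<Phi> (cis (2 * pi * y))"
    have "cis (2 * pi * x) = cis (2 * pi * y)"
      using inj_onD[OF inj eq] by simp
    then obtain n :: int where n: "2 * pi * x = 2 * pi * y + 2 * pi * n" by (rule cis_eq_int)
    then have "2 * pi * x = 2 * pi * (y + n)" by (simp add: algebra_simps)
    then have xy: "x = y + n" by simp
    then have "n \<le> 1" "n \<ge> -1" using x y by auto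
    then have "n = -1 \<or> n = 0 \<or> n = 1" by linarith
    then show "x = y \<or> x = 0 \<and> y = 1 \<or> x = 1 \<and> y = 0"
      using xy x y by auto
  qed
  show "simple_path (\<lambda>x. \<Phi> (cis (2 * pi * x)))" using pth lf by (simp add: simple_path_def)
  show "pathfinish (\<lambda>x. \<Phi> (cis (2 * pi * x))) = pathstart (\<lambda>x. \<Phi> (cis (2 * pi * x)))"
    by (simp add: pathfinish_def pathstart_def)
qed

lemma inner_ofreal_left: "(complex_of_real a * v) \<bullet> w = a * (v \<bullet> w)"
  by (simp add: inner_complex_def algebra_simps)

lemma re_div_lemma: "Re ((X - Y) / (2 * pi * \<i>) - (Y - X) / (2 * pi * \<i>)) = (Im X - Im Y) / pi"
proof -
  have "(X - Y) / (2 * pi * \<i>) - (Y - X) / (2 * pi * \<i>) = - \<i> * (X - Y) / complex_of_real pi"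
    by (simp add: field_simps)
  then show ?thesis by (simp add: Re_divide power2_eq_square field_simps)
qed

lemma abs_aux: fixes k d :: real
  shows "\<bar>k * d\<bar> * (\<bar>d\<bar> * (pi * \<bar>k\<bar>)) = pi * k\<^sup>2 * d\<^sup>2"
proof -
  have "\<bar>k * d\<bar> * (\<bar>d\<bar> * (pi * \<bar>k\<bar>)) = pi * (\<bar>k\<bar> * \<bar>k\<bar>) * (\<bar>d\<bar> * \<bar>d\<bar>)"
    by (simp only: abs_mult mult.assoc mult.left_commute mult.commute)
  then show ?thesis by (simp only: abs_mult_self_eq power2_eq_square)
qed

lemma orientation:
  fixes \<Phi> :: "complex \<Rightarrow> complex" and \<Phi>' :: "real \<Rightarrow> complex" and D :: "complex set"
  assumes Phi_C1: "\<And>t. ((\<lambda>t. \<Phi> (cis t)) has_vector_derivative \<Phi>' t) (at t)"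
    and Phi'_cont: "continuous_on UNIV \<Phi>'"
    and Phi_inj: "inj_on \<Phi> (sphere 0 1)"
    and D_open: "open D" and D_bdry: "frontier D = \<Phi> ` sphere 0 1"
    and orient: "\<And>w. w \<in> D \<Longrightarrow> winding_number (\<lambda>t. \<Phi> (cis (2 * pi * t))) w = 1"
    and t0: "-pi < t0" "t0 \<le> pi"
    and nu: "norm \<nu> = 1"
    and supp: "\<And>x. x \<in> sphere 0 1 \<Longrightarrow> (\<Phi> x - \<Phi> (cis t0)) \<bullet> \<nu> \<le> 0"
    and tang: "\<Phi>' t0 = complex_of_real k * (\<i> * \<nu>)"
    and kneg: "k < 0"
  shows False
proof -
  define \<sigma> where "\<sigma> = (\<lambda>t. \<Phi> (cis t))"
  define p where "p = \<sigma> t0"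
  define \<gamma> where "\<gamma> = (\<lambda>x. \<Phi> (cis (2 * pi * x)))"
  define g where "g = (\<lambda>x::real. \<sigma> (t0 + 2 * pi * (x - 1/2)))"
  define e1 where "e1 = \<i> * \<nu>"
  define c0 where "c0 = 2 * pi * k"
  define L where "L = (\<lambda>x::real. p + complex_of_real ((x - 1/2) * c0) * e1)"
  have \<sigma>d: "(\<sigma> has_vector_derivative \<Phi>' t) (at t)" for t unfolding \<sigma>_def by (rule Phi_C1)
  have \<sigma>c: "continuous_on UNIV \<sigma>"
    by (rule continuous_at_imp_continuous_on) (use \<sigma>d has_vector_derivative_continuous in blast)
  have e1nu: "e1 \<bullet> \<nu> = 0" by (simp add: e1_def inner_complex_def)
  have nunu: "\<nu> \<bullet> \<nu> = 1" using nu by (simp add: power2_norm_eq_inner[symmetric])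
  have ne1: "norm e1 = 1" using nu by (simp add: e1_def norm_mult)
  have e1e1: "e1 \<bullet> e1 = 1" using ne1 by (simp add: power2_norm_eq_inner[symmetric])
  have nu0: "\<nu> \<noteq> 0" using nu by auto
  have kabs: "\<bar>k\<bar> > 0" using kneg by simp
  have supp': "(\<sigma> t - p) \<bullet> \<nu> \<le> 0" for t using supp[of "cis t"] by (simp add: \<sigma>_def p_def)
  have gd: "(g has_vector_derivative (2 * pi) *\<^sub>R \<Phi>' (t0 + 2 * pi * (x - 1/2))) (at x)" for x
  proof -
    have "((\<lambda>x. t0 + 2 * pi * (x - 1/2)) has_real_derivative 2 * pi) (at x)"
      by (auto intro!: derivative_eq_intros)
    then have "((\<lambda>x. t0 + 2 * pi * (x - 1/2)) has_vector_derivative 2 * pi) (at x)"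
      using has_real_derivative_iff_has_vector_derivative by blast
    from vector_diff_chain_at[OF this \<sigma>d] show ?thesis by (simp add: g_def o_def)
  qed
  have gc: "continuous_on UNIV g"
    by (rule continuous_at_imp_continuous_on) (use gd has_vector_derivative_continuous in blast)
  have g_half: "g (1/2) = p" by (simp add: g_def p_def)
  have L_half: "L (1/2) = p" by (simp add: L_def)
  obtain \<eta>0 where eta0: "\<eta>0 > 0" "\<And>s. dist s t0 < \<eta>0 \<Longrightarrow> dist (\<Phi>' s) (\<Phi>' t0) < \<bar>k\<bar> / 2"
  proof -
    have "\<bar>k\<bar> / 2 > 0" using kabs by simp
    then obtain d where "d > 0" "\<forall>s\<in>UNIV. dist s t0 < d \<longrightarrow> dist (\<Phi>' s) (\<Phi>' t0) < \<bar>k\<bar> / 2"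
      using Phi'_cont unfolding continuous_on_iff by blast
    then show ?thesis using that by blast
  qed
  define \<eta> where "\<eta> = min (1/4) (\<eta>0 / (4 * pi))"
  have eta: "\<eta> > 0" "\<eta> \<le> 1/4" "2 * pi * \<eta> < \<eta>0"
  proof -
    show "\<eta> > 0" "\<eta> \<le> 1/4" using eta0 pi_gt_zero by (auto simp: \<eta>_def)
    have "2 * pi * \<eta> \<le> 2 * pi * (\<eta>0 / (4 * pi))" using pi_gt_zero by (intro mult_left_mono) (auto simp: \<eta>_def)
    also have "\<dots> = \<eta>0 / 2" using pi_gt_zero by (simp add: field_simps)
    finally show "2 * pi * \<eta> < \<eta>0" using eta0 by linarith
  qed
  define W where "W = {1/2 - \<eta> .. 1/2 + \<eta>}"
  have inW: "x \<in> W \<longleftrightarrow> \<bar>x - 1/2\<bar> \<le> \<eta>" for x by (auto simp: W_def abs_le_iff)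
  have E1: "norm (g x - L x) \<le> \<bar>x - 1/2\<bar> * (pi * \<bar>k\<bar>)" if xW: "x \<in> W" for x
  proof -
    have B: "norm ((2 * pi) *\<^sub>R \<Phi>' (t0 + 2 * pi * (y - 1/2)) - (2 * pi) *\<^sub>R \<Phi>' (t0 + 2 * pi * (1/2 - 1/2))) \<le> pi * \<bar>k\<bar>"
      if "y \<in> W" for y
    proof -
      have "dist (t0 + 2 * pi * (y - 1/2)) t0 = 2 * pi * \<bar>y - 1/2\<bar>"
        using pi_gt_zero by (simp add: dist_real_def abs_mult)
      also have "\<dots> \<le> 2 * pi * \<eta>" using that inW pi_gt_zero by simp
      finally have "dist (t0 + 2 * pi * (y - 1/2)) t0 < \<eta>0" using eta by linarith
      then have "dist (\<Phi>' (t0 + 2 * pi * (y - 1/2))) (\<Phi>' t0) < \<bar>k\<bar> / 2" by (rule eta0(2))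
      then have "norm (\<Phi>' (t0 + 2 * pi * (y - 1/2)) - \<Phi>' t0) \<le> \<bar>k\<bar> / 2" by (simp add: dist_norm)
      then have "2 * pi * norm (\<Phi>' (t0 + 2 * pi * (y - 1/2)) - \<Phi>' t0) \<le> 2 * pi * (\<bar>k\<bar> / 2)"
        using pi_gt_zero by (intro mult_left_mono) auto
      moreover have "norm ((2 * pi) *\<^sub>R \<Phi>' (t0 + 2 * pi * (y - 1/2)) - (2 * pi) *\<^sub>R \<Phi>' (t0 + 2 * pi * (1/2 - 1/2)))
          = 2 * pi * norm (\<Phi>' (t0 + 2 * pi * (y - 1/2)) - \<Phi>' t0)"
        using pi_gt_zero by (simp add: scaleR_diff_right[symmetric])
      ultimately show ?thesis by simp
    qed
    have seg: "closed_segment (1/2) x \<subseteq> W"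
      using xW by (auto simp: closed_segment_eq_real_ivl W_def split: if_splits)
    have hW: "1/2 \<in> W" using eta by (simp add: W_def)
    have "norm (g x - g (1/2) - (x - 1/2) *\<^sub>R ((2 * pi) *\<^sub>R \<Phi>' (t0 + 2 * pi * (1/2 - 1/2)))) \<le> norm (x - 1/2) * (pi * \<bar>k\<bar>)"
      by (rule vector_differentiable_bound_linearization[where S=W and f=g and a="1/2" and b=x
            and B="pi * \<bar>k\<bar>" and f'="\<lambda>y. (2 * pi) *\<^sub>R \<Phi>' (t0 + 2 * pi * (y - 1/2))"])
         (use gd B seg hW in \<open>auto intro: has_vector_derivative_at_within\<close>)
    moreover have "g (1/2) + (x - 1/2) *\<^sub>R ((2 * pi) *\<^sub>R \<Phi>' (t0 + 2 * pi * (1/2 - 1/2))) = L x"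
      by (simp add: g_half L_def tang c0_def e1_def scaleR_conv_of_real algebra_simps)
    ultimately show ?thesis by (simp add: algebra_simps)
  qed
  define Xs where "Xs = (\<lambda>x. (g x - p) \<bullet> e1)"
  have Lp: "L x - p = complex_of_real ((x - 1/2) * c0) * e1" for x by (simp add: L_def)
  have Lpe1: "(L x - p) \<bullet> e1 = (x - 1/2) * c0" for x
    unfolding Lp inner_ofreal_left e1e1 by simp
  have Lpnu: "(L x - p) \<bullet> \<nu> = 0" for x
    unfolding Lp inner_ofreal_left e1nu by simp
  have XS: "k * (x - 1/2) * Xs x \<ge> pi * k\<^sup>2 * (x - 1/2)\<^sup>2" if xW: "x \<in> W" for x
  proof -
    define err where "err = (g x - L x) \<bullet> e1"
    have Xe: "Xs x = (x - 1/2) * c0 + err"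
    proof -
      have "g x - p = (L x - p) + (g x - L x)" by simp
      then have "Xs x = (L x - p) \<bullet> e1 + err" unfolding Xs_def err_def by (metis inner_add_left)
      then show ?thesis by (simp add: Lpe1)
    qed
    have a1: "\<bar>err\<bar> \<le> \<bar>x - 1/2\<bar> * (pi * \<bar>k\<bar>)"
    proof -
      have "\<bar>err\<bar> \<le> norm (g x - L x) * norm e1" unfolding err_def by (rule Cauchy_Schwarz_ineq2)
      then show ?thesis using E1[OF xW] ne1 by simp
    qed
    have a2: "\<bar>k * (x - 1/2) * err\<bar> \<le> \<bar>k * (x - 1/2)\<bar> * (\<bar>x - 1/2\<bar> * (pi * \<bar>k\<bar>))"
      unfolding abs_mult[of "k * (x - 1/2)" err] by (rule mult_left_mono[OF a1]) simp
    have a3: "\<bar>k * (x - 1/2)\<bar> * (\<bar>x - 1/2\<bar> * (pi * \<bar>k\<bar>)) = pi * k\<^sup>2 * (x - 1/2)\<^sup>2"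
      by (rule abs_aux)
    have eq: "k * (x - 1/2) * Xs x = 2 * (pi * k\<^sup>2 * (x - 1/2)\<^sup>2) + k * (x - 1/2) * err"
      by (simp add: Xe c0_def power2_eq_square algebra_simps)
    have a4: "\<bar>k * (x - 1/2) * err\<bar> \<le> pi * k\<^sup>2 * (x - 1/2)\<^sup>2" using a2 a3 by linarith
    have a5: "k * (x - 1/2) * err \<ge> - (pi * k\<^sup>2 * (x - 1/2)\<^sup>2)"
      using a4 abs_ge_minus_self[of "k * (x - 1/2) * err"] by linarith
    show ?thesis using eq a5 by linarith
  qed
  have Qne: "(g x + complex_of_real \<mu> * (L x - g x) - p) \<bullet> e1 \<noteq> 0"
    if xW: "x \<in> W" and x2: "x \<noteq> 1/2" and mu: "0 \<le> \<mu>" "\<mu> \<le> 1" for x \<mu>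
  proof -
    have eq: "g x + complex_of_real \<mu> * (L x - g x) - p = complex_of_real (1 - \<mu>) * (g x - p) + complex_of_real \<mu> * (L x - p)"
      by (simp add: algebra_simps)
    have val: "(g x + complex_of_real \<mu> * (L x - g x) - p) \<bullet> e1 = (1 - \<mu>) * Xs x + \<mu> * ((x - 1/2) * c0)"
      unfolding eq inner_add_left inner_ofreal_left Xs_def Lpe1 by simp
    have d2: "(x - 1/2)\<^sup>2 > 0" using x2 by simp
    have k2: "k\<^sup>2 > 0" using kneg by simp
    have P: "pi * k\<^sup>2 * (x - 1/2)\<^sup>2 > 0" using d2 k2 pi_gt_zero by simp
    have "k * (x - 1/2) * ((1 - \<mu>) * Xs x + \<mu> * ((x - 1/2) * c0))
        = (1 - \<mu>) * (k * (x - 1/2) * Xs x) + \<mu> * (2 * (pi * k\<^sup>2 * (x - 1/2)\<^sup>2))"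
      by (simp add: c0_def power2_eq_square field_simps)
    also have "\<dots> \<ge> (1 - \<mu>) * (pi * k\<^sup>2 * (x - 1/2)\<^sup>2) + \<mu> * (pi * k\<^sup>2 * (x - 1/2)\<^sup>2)"
      using XS[OF xW] mu P by (intro add_mono mult_left_mono) auto
    also have "(1 - \<mu>) * (pi * k\<^sup>2 * (x - 1/2)\<^sup>2) + \<mu> * (pi * k\<^sup>2 * (x - 1/2)\<^sup>2) = pi * k\<^sup>2 * (x - 1/2)\<^sup>2"
      by (simp add: algebra_simps)
    finally have "k * (x - 1/2) * ((1 - \<mu>) * Xs x + \<mu> * ((x - 1/2) * c0)) > 0" using P by linarith
    then show ?thesis unfolding val by auto
  qed
  have gp: "x = 1/2" if "g x = p" "x \<in> {0..1}" for x
  proof -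
    have "\<Phi> (cis (t0 + 2 * pi * (x - 1/2))) = \<Phi> (cis t0)" using that by (simp add: g_def p_def \<sigma>_def)
    then have "cis (t0 + 2 * pi * (x - 1/2)) = cis t0" using inj_onD[OF Phi_inj] by simp
    then obtain n :: int where n: "t0 + 2 * pi * (x - 1/2) = t0 + 2 * pi * n" by (rule cis_eq_int)
    then have "2 * pi * (x - 1/2) = 2 * pi * n" by simp
    then have xn: "x - 1/2 = n" by simp
    then have "n < 1" "n > -1" using that(2) by auto
    then have "n = 0" by linarith
    then show ?thesis using xn by simp
  qed
  define F where "F = g ` ({0..1/2 - \<eta>} \<union> {1/2 + \<eta>..1})"
  have cF: "closed F"
  proof -
    have "compact F" unfolding F_def
      by (intro compact_continuous_image continuous_on_subset[OF gc] compact_Un compact_Icc) auto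
    then show ?thesis by (rule compact_imp_closed)
  qed
  have pF: "p \<notin> F"
  proof
    assume "p \<in> F"
    then obtain x where x0: "p = g x" "x \<in> {0..1/2 - \<eta>} \<union> {1/2 + \<eta>..1}"
      unfolding F_def by (rule imageE)
    then have x: "x \<in> {0..1/2 - \<eta>} \<union> {1/2 + \<eta>..1}" "g x = p" by simp_all
    then have "x \<in> {0..1}" using eta by auto
    then have "x = 1/2" using gp x by blast
    then show False using x eta by auto
  qed
  obtain r1 where r1: "r1 > 0" "\<And>y. y \<in> F \<Longrightarrow> r1 \<le> dist p y"
    using separate_point_closed[OF cF pF] by blast
  have gF: "g x \<in> F" if "x \<in> {0..1}" "\<bar>x - 1/2\<bar> \<ge> \<eta>" for x
    using that by (auto simp: F_def abs_if split: if_splits)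
  define \<phi> where "\<phi> = (\<lambda>x::real. max 0 (min 1 (2 - 2 * \<bar>x - 1/2\<bar> / \<eta>)))"
  define h where "h = (\<lambda>x. g x + complex_of_real (\<phi> x) * (L x - g x))"
  have phi01: "0 \<le> \<phi> x" "\<phi> x \<le> 1" for x by (auto simp: \<phi>_def)
  have phi0: "\<phi> x = 0" if "\<bar>x - 1/2\<bar> \<ge> \<eta>" for x
  proof -
    have "2 * \<bar>x - 1/2\<bar> / \<eta> \<ge> 2" using that eta by (simp add: le_divide_eq)
    then show ?thesis by (simp add: \<phi>_def)
  qed
  have phi1: "\<phi> x = 1" if "\<bar>x - 1/2\<bar> \<le> \<eta>/2" for x
  proof -
    have "2 * \<bar>x - 1/2\<bar> / \<eta> \<le> 1" using that eta by (simp add: divide_le_eq)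
    then show ?thesis by (simp add: \<phi>_def)
  qed
  have hg: "h x = g x" if "\<bar>x - 1/2\<bar> \<ge> \<eta>" for x using phi0[OF that] by (simp add: h_def)
  have hL: "h x = L x" if "\<bar>x - 1/2\<bar> \<le> \<eta>/2" for x using phi1[OF that] by (simp add: h_def)
  have phic: "continuous_on UNIV \<phi>" unfolding \<phi>_def using eta by (intro continuous_intros) auto
  have Lc: "continuous_on UNIV L" unfolding L_def by (intro continuous_intros)
  have hc: "continuous_on UNIV h" unfolding h_def by (intro continuous_intros gc Lc phic)
  have path_g: "path g" unfolding path_def by (rule continuous_on_subset[OF gc]) auto
  have path_h: "path h" unfolding path_def by (rule continuous_on_subset[OF hc]) auto
  have g01: "g 0 = g 1"
  proof -
    have "t0 + 2 * pi * (1 - 1/2) = (t0 + 2 * pi * (0 - 1/2)) + 2 * pi" by simp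
    then show ?thesis unfolding g_def \<sigma>_def by (metis cis_add_2pi)
  qed
  have h0: "h 0 = g 0" by (rule hg) (use eta in simp)
  have h1: "h 1 = g 1" by (rule hg) (use eta in simp)
  have loop_g: "pathfinish g = pathstart g" using g01 by (simp add: pathfinish_def pathstart_def)
  have loop_h: "pathfinish h = pathstart h" using g01 h0 h1 by (simp add: pathfinish_def pathstart_def)

  have hne_p: "h x \<noteq> p" if x01: "x \<in> {0..1}" and xd: "\<bar>x - 1/2\<bar> \<ge> \<eta>/2" for x
  proof (cases "\<bar>x - 1/2\<bar> \<ge> \<eta>")
    case True
    then have "h x = g x" "g x \<in> F" using hg gF x01 by auto
    then show ?thesis using r1 by force
  next
    case False
    then have xW: "x \<in> W" using inW by simp
    have x2: "x \<noteq> 1/2" using xd eta by auto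
    have "(h x - p) \<bullet> e1 \<noteq> 0" unfolding h_def by (rule Qne[OF xW x2 phi01])
    then show ?thesis by auto
  qed
  define a1 where "a1 = 1/2 - \<eta>/2"
  define b1 where "b1 = 1/2 + \<eta>/2"
  have a1b1: "0 \<le> a1" "a1 \<le> b1" "b1 \<le> 1" using eta by (auto simp: a1_def b1_def)
  define \<rho>1 where "\<rho>1 = subpath 0 a1 h"
  define \<rho>2 where "\<rho>2 = subpath b1 1 h"
  have path_\<rho>1: "path \<rho>1" unfolding \<rho>1_def using path_h a1b1 by simp
  have path_\<rho>2: "path \<rho>2" unfolding \<rho>2_def using path_h a1b1 by simp
  have p\<rho>1: "p \<notin> path_image \<rho>1"
  proof
    assume "p \<in> path_image \<rho>1"
    then obtain x where "x \<in> {0..a1}" "h x = p" using a1b1 by (auto simp: \<rho>1_def path_image_subpath)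
    moreover have "\<bar>x - 1/2\<bar> \<ge> \<eta>/2" "x \<in> {0..1}" using calculation(1) a1b1 by (auto simp: a1_def abs_if)
    ultimately show False using hne_p by blast
  qed
  have p\<rho>2: "p \<notin> path_image \<rho>2"
  proof
    assume "p \<in> path_image \<rho>2"
    then obtain x where "x \<in> {b1..1}" "h x = p" using a1b1 by (auto simp: \<rho>2_def path_image_subpath)
    moreover have "\<bar>x - 1/2\<bar> \<ge> \<eta>/2" "x \<in> {0..1}" using calculation(1) a1b1 by (auto simp: b1_def abs_if)
    ultimately show False using hne_p by blast
  qed
  obtain r2 where r2: "r2 > 0" "\<And>z. dist z p < r2 \<Longrightarrow> dist (winding_number \<rho>1 z) (winding_number \<rho>1 p) < 1/8"
  proof -
    have "continuous (at p) (winding_number \<rho>1)" by (rule continuous_at_winding_number[OF path_\<rho>1 p\<rho>1])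
    then obtain d where "d > 0" "\<forall>z. dist z p < d \<longrightarrow> dist (winding_number \<rho>1 z) (winding_number \<rho>1 p) < 1/8"
      unfolding continuous_at_eps_delta by (meson divide_pos_pos zero_less_numeral zero_less_one)
    then show ?thesis using that by blast
  qed
  obtain r3 where r3: "r3 > 0" "\<And>z. dist z p < r3 \<Longrightarrow> dist (winding_number \<rho>2 z) (winding_number \<rho>2 p) < 1/8"
  proof -
    have "continuous (at p) (winding_number \<rho>2)" by (rule continuous_at_winding_number[OF path_\<rho>2 p\<rho>2])
    then obtain d where "d > 0" "\<forall>z. dist z p < d \<longrightarrow> dist (winding_number \<rho>2 z) (winding_number \<rho>2 p) < 1/8"
      unfolding continuous_at_eps_delta by (meson divide_pos_pos zero_less_numeral zero_less_one)
    then show ?thesis using that by blast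
  qed
  define m where "m = \<eta>/2 * c0"
  have m_eq: "m = pi * \<eta> * k" by (simp add: m_def c0_def)
  have mpos: "pi * \<eta> * \<bar>k\<bar> > 0" using eta kabs pi_gt_zero by simp
  define s where "s = min (min r1 r2) (min r3 (pi * \<eta> * \<bar>k\<bar>)) / 2"
  have s: "s > 0" "s < r1" "s < r2" "s < r3" "s \<le> pi * \<eta> * \<bar>k\<bar>"
    using r1 r2 r3 mpos by (auto simp: s_def)
  have ms: "m \<le> - s" using s(5) kneg by (simp add: m_eq)
  define w where "w = p - complex_of_real s * \<nu>"
  define w' where "w' = p + complex_of_real s * \<nu>"
  have dw: "dist w p = s" "dist w' p = s" using nu s by (simp_all add: w_def w'_def dist_norm norm_mult)
  have wp: "w - p = complex_of_real (- s) * \<nu>" by (simp add: w_def)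
  have w'p: "w' - p = complex_of_real s * \<nu>" by (simp add: w'_def)
  have nue1: "\<nu> \<bullet> e1 = 0" using e1nu by (simp add: inner_commute)
  have wpe1: "(w - p) \<bullet> e1 = 0" unfolding wp inner_ofreal_left nue1 by simp
  have w'nu: "(w' - p) \<bullet> \<nu> = s" unfolding w'p inner_ofreal_left nunu by simp
  have seg: "w \<notin> closed_segment (g x) (h x)" if x01: "x \<in> {0..1}" for x
  proof
    assume "w \<in> closed_segment (g x) (h x)"
    then obtain u where u: "0 \<le> u" "u \<le> 1" "w = (1 - u) *\<^sub>R g x + u *\<^sub>R h x"
      unfolding closed_segment_def by auto
    have wq: "w = g x + complex_of_real (u * \<phi> x) * (L x - g x)"
      using u(3) by (simp add: h_def scaleR_conv_of_real algebra_simps)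
    show False
    proof (cases "\<bar>x - 1/2\<bar> \<ge> \<eta>")
      case True
      then have "w = g x" using wq phi0 by simp
      moreover have "g x \<in> F" using gF True x01 by simp
      ultimately have "r1 \<le> dist p w" using r1 by simp
      then show False using dw s by (simp add: dist_commute)
    next
      case False
      show False
      proof (cases "x = 1/2")
        case True
        have "g x = p" "L x = p" by (simp_all only: True g_half L_half)
        then have "w = p" using wq by simp
        then show False using dw s by simp
      next
        case x2: False
        have xW: "x \<in> W" using False inW by simp
        have mu: "0 \<le> u * \<phi> x" "u * \<phi> x \<le> 1" using u phi01[of x] by (auto simp: mult_le_one)
        have "(w - p) \<bullet> e1 \<noteq> 0" unfolding wq by (rule Qne[OF xW x2 mu])
        then show False using wpe1 by simp
      qed
    qed
  qed
  have wn_hg: "winding_number h w = winding_number g w"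
    by (rule winding_number_loops_linear_eq[OF path_g path_h loop_g loop_h]) (use seg in auto)
  have w_h: "w \<notin> path_image h"
  proof
    assume "w \<in> path_image h"
    then obtain x where "x \<in> {0..1}" "w = h x" by (auto simp: path_image_def)
    then show False using seg[of x] by auto
  qed
  have w_g: "w \<notin> path_image g"
  proof
    assume "w \<in> path_image g"
    then obtain x where "x \<in> {0..1}" "w = g x" by (auto simp: path_image_def)
    then show False using seg[of x] by auto
  qed
  define H where "H = {y. \<nu> \<bullet> y \<le> \<nu> \<bullet> p}"
  have cH: "convex H" unfolding H_def by (rule convex_halfspace_le)
  have hH: "path_image h \<subseteq> H"
  proof
    fix y assume "y \<in> path_image h"
    then obtain x where y: "y = h x" by (auto simp: path_image_def)
    have eq: "h x - p = complex_of_real (1 - \<phi> x) * (g x - p) + complex_of_real (\<phi> x) * (L x - p)"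
      by (simp add: h_def algebra_simps)
    have "(h x - p) \<bullet> \<nu> = (1 - \<phi> x) * ((g x - p) \<bullet> \<nu>)"
      unfolding eq inner_add_left inner_ofreal_left Lpnu by simp
    also have "\<dots> \<le> 0" using phi01[of x] supp'[of "t0 + 2 * pi * (x - 1/2)"]
      by (simp add: g_def mult_nonneg_nonpos)
    finally have "\<nu> \<bullet> (h x - p) \<le> 0" by (simp add: inner_commute)
    then show "y \<in> H" using y by (simp add: H_def inner_diff_right)
  qed
  have w'H: "w' \<notin> H"
  proof
    assume "w' \<in> H"
    then have "\<nu> \<bullet> (w' - p) \<le> 0" by (simp add: H_def inner_diff_right)
    then have "(w' - p) \<bullet> \<nu> \<le> 0" by (simp add: inner_commute)
    then show False using w'nu s by simp
  qed
  have w'_h: "w' \<notin> path_image h" using hH w'H by blast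
  have wn_hw': "winding_number h w' = 0"
    by (rule winding_number_zero_outside[OF path_h cH loop_h w'H hH])
  define A where "A = L a1"
  define B where "B = L b1"
  have mid: "winding_number (subpath a1 b1 h) z = winding_number (linepath A B) z" for z
  proof (rule winding_number_cong)
    fix t :: real assume t: "0 \<le> t" "t \<le> 1"
    have e: "(b1 - a1) * t + a1 - 1/2 = \<eta> * (t - 1/2)" by (simp add: a1_def b1_def algebra_simps)
    have t2: "\<bar>t - 1/2\<bar> \<le> 1/2" using t by (auto simp: abs_if)
    have "\<eta> * \<bar>t - 1/2\<bar> \<le> \<eta> * (1/2)" using eta t2 by (intro mult_left_mono) auto
    then have "\<bar>(b1 - a1) * t + a1 - 1/2\<bar> \<le> \<eta>/2" unfolding e using eta by (simp add: abs_mult)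
    then have "subpath a1 b1 h t = L ((b1 - a1) * t + a1)" by (simp add: subpath_def hL)
    also have "\<dots> = linepath A B t"
      by (simp add: linepath_def A_def B_def L_def scaleR_conv_of_real field_simps)
    finally show "subpath a1 b1 h t = linepath A B t" .
  qed
  have decomp: "winding_number h z = winding_number \<rho>1 z + winding_number (linepath A B) z + winding_number \<rho>2 z"
    if z: "z \<notin> path_image h" for z
  proof -
    have "winding_number (subpath 0 a1 h) z + winding_number (subpath a1 b1 h) z = winding_number (subpath 0 b1 h) z"
      by (rule winding_number_subpath_combine[OF path_h z]) (use a1b1 in auto)
    moreover have "winding_number (subpath 0 b1 h) z + winding_number (subpath b1 1 h) z = winding_number (subpath 0 1 h) z"
      by (rule winding_number_subpath_combine[OF path_h z]) (use a1b1 in auto)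
    ultimately show ?thesis by (simp add: \<rho>1_def \<rho>2_def mid)
  qed
  have Aw: "(A - w) / \<nu> = complex_of_real s - \<i> * complex_of_real m"
    using nu0 by (simp add: A_def L_def w_def m_def a1_def e1_def field_simps)
  have Bw: "(B - w) / \<nu> = complex_of_real s + \<i> * complex_of_real m"
    using nu0 by (simp add: B_def L_def w_def m_def b1_def e1_def field_simps)
  have Aw': "(A - w') / (- \<nu>) = complex_of_real s + \<i> * complex_of_real m"
    using nu0 by (simp add: A_def L_def w'_def m_def a1_def e1_def field_simps)
  have Bw': "(B - w') / (- \<nu>) = complex_of_real s - \<i> * complex_of_real m"
    using nu0 by (simp add: B_def L_def w'_def m_def b1_def e1_def field_simps)
  define Zp where "Zp = complex_of_real s + \<i> * complex_of_real m"
  define Zm where "Zm = complex_of_real s - \<i> * complex_of_real m"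
  have rA: "Re ((A - w) / \<nu>) > 0" unfolding Aw using s by simp
  have rB: "Re ((B - w) / \<nu>) > 0" unfolding Bw using s by simp
  have n0: "- \<nu> \<noteq> 0" using nu0 by simp
  have rA': "Re ((A - w') / (- \<nu>)) > 0" unfolding Aw' using s by simp
  have rB': "Re ((B - w') / (- \<nu>)) > 0" unfolding Bw' using s by simp
  have lw0: "winding_number (linepath A B) w = (Ln ((B - w) / \<nu>) - Ln ((A - w) / \<nu>)) / (2 * pi * \<i>)"
    by (rule wn_linepath_Ln[OF nu0 rA rB])
  have lw: "winding_number (linepath A B) w = (Ln Zp - Ln Zm) / (2 * pi * \<i>)"
    using lw0 unfolding Aw Bw Zp_def Zm_def .
  have lw0': "winding_number (linepath A B) w' = (Ln ((B - w') / (- \<nu>)) - Ln ((A - w') / (- \<nu>))) / (2 * pi * \<i>)"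
    by (rule wn_linepath_Ln[OF n0 rA' rB'])
  have lw': "winding_number (linepath A B) w' = (Ln Zm - Ln Zp) / (2 * pi * \<i>)"
    using lw0' unfolding Aw' Bw' Zp_def Zm_def .
  have ImZp: "Im (Ln Zp) = arctan (m / s)"
  proof -
    have "Zp \<noteq> 0" using s by (auto simp: Zp_def complex_eq_iff)
    then have "Im (Ln Zp) = Arg Zp" by (simp add: Arg_eq_Im_Ln)
    also have "\<dots> = arctan (m / s)" using s by (simp add: arg_conv_arctan Zp_def)
    finally show ?thesis .
  qed
  have ImZm: "Im (Ln Zm) = - arctan (m / s)"
  proof -
    have "Zm \<noteq> 0" using s by (auto simp: Zm_def complex_eq_iff)
    then have "Im (Ln Zm) = Arg Zm" by (simp add: Arg_eq_Im_Ln)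
    also have "\<dots> = arctan (- m / s)" using s by (simp add: arg_conv_arctan Zm_def)
    finally show ?thesis by (simp add: arctan_minus)
  qed
  have lin_diff: "Re (winding_number (linepath A B) w - winding_number (linepath A B) w') \<le> -1/2"
  proof -
    have "Re (winding_number (linepath A B) w - winding_number (linepath A B) w') = 2 * arctan (m / s) / pi"
      unfolding lw lw' re_div_lemma ImZp ImZm by simp
    moreover have "m / s \<le> -1" using ms s by (simp add: divide_le_eq)
    then have "arctan (m / s) \<le> - (pi / 4)"
      using arctan_le_iff[of "m / s" "-1"] by (simp add: arctan_minus arctan_one)
    then have "2 * arctan (m / s) / pi \<le> -1/2" using pi_gt_zero by (simp add: divide_le_eq)
    ultimately show ?thesis by simp
  qed
  have dec_w: "winding_number g w = winding_number \<rho>1 w + winding_number (linepath A B) w + winding_number \<rho>2 w"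
    using decomp[OF w_h] wn_hg by simp
  have dec_w': "0 = winding_number \<rho>1 w' + winding_number (linepath A B) w' + winding_number \<rho>2 w'"
    using decomp[OF w'_h] wn_hw' by simp
  have c1: "norm (winding_number \<rho>1 w - winding_number \<rho>1 w') < 1/4"
  proof -
    have "dist (winding_number \<rho>1 w) (winding_number \<rho>1 p) < 1/8" using r2 dw s by simp
    moreover have "dist (winding_number \<rho>1 w') (winding_number \<rho>1 p) < 1/8" using r2 dw s by simp
    ultimately show ?thesis
      using dist_triangle2[of "winding_number \<rho>1 w" "winding_number \<rho>1 w'" "winding_number \<rho>1 p"]
      by (simp add: dist_norm)
  qed
  have c2: "norm (winding_number \<rho>2 w - winding_number \<rho>2 w') < 1/4"
  proof -
    have "dist (winding_number \<rho>2 w) (winding_number \<rho>2 p) < 1/8" using r3 dw s by simp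
    moreover have "dist (winding_number \<rho>2 w') (winding_number \<rho>2 p) < 1/8" using r3 dw s by simp
    ultimately show ?thesis
      using dist_triangle2[of "winding_number \<rho>2 w" "winding_number \<rho>2 w'" "winding_number \<rho>2 p"]
      by (simp add: dist_norm)
  qed
  have Reg: "Re (winding_number g w) < 0"
  proof -
    have "winding_number g w = (winding_number \<rho>1 w - winding_number \<rho>1 w')
        + (winding_number (linepath A B) w - winding_number (linepath A B) w')
        + (winding_number \<rho>2 w - winding_number \<rho>2 w')"
      using dec_w dec_w' by (simp add: algebra_simps)
    then have "Re (winding_number g w) = Re (winding_number \<rho>1 w - winding_number \<rho>1 w')
        + Re (winding_number (linepath A B) w - winding_number (linepath A B) w')
        + Re (winding_number \<rho>2 w - winding_number \<rho>2 w')" by simp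
    moreover have "Re (winding_number \<rho>1 w - winding_number \<rho>1 w') < 1/4"
      using c1 abs_Re_le_cmod[of "winding_number \<rho>1 w - winding_number \<rho>1 w'"] by linarith
    moreover have "Re (winding_number \<rho>2 w - winding_number \<rho>2 w') < 1/4"
      using c2 abs_Re_le_cmod[of "winding_number \<rho>2 w - winding_number \<rho>2 w'"] by linarith
    ultimately show ?thesis using lin_diff by linarith
  qed
  define a where "a = (t0 + pi) / (2 * pi)"
  have a01: "a \<in> {0..1}" using t0 pi_gt_zero by (auto simp: a_def field_simps)
  have shift_eq: "shiftpath a \<gamma> x = g x" if "0 \<le> x" "x \<le> 1" for x
  proof (cases "a + x \<le> 1")
    case True
    have "2 * pi * (a + x) = (t0 + 2 * pi * (x - 1/2)) + 2 * pi"
      using pi_gt_zero by (simp add: a_def field_simps)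
    then have "\<gamma> (a + x) = g x" by (simp add: \<gamma>_def g_def \<sigma>_def cis_add_2pi)
    then show ?thesis using True by (simp add: shiftpath_def)
  next
    case False
    have "2 * pi * (a + x - 1) = t0 + 2 * pi * (x - 1/2)"
      using pi_gt_zero by (simp add: a_def field_simps)
    then have "\<gamma> (a + x - 1) = g x" by (simp add: \<gamma>_def g_def \<sigma>_def)
    then show ?thesis using False by (simp add: shiftpath_def)
  qed
  have cont\<sigma>: "continuous_on UNIV (\<lambda>t. \<Phi> (cis t))" using \<sigma>c by (simp add: \<sigma>_def)
  have sp: "simple_path \<gamma>" and lp: "pathfinish \<gamma> = pathstart \<gamma>"
    using gamma_simple[OF cont\<sigma> Phi_inj] by (simp_all add: \<gamma>_def)
  have path_\<gamma>: "path \<gamma>" using sp simple_path_imp_path by blast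
  have img_eq: "path_image (shiftpath a \<gamma>) = path_image g"
    unfolding path_image_def using shift_eq by auto
  have img_\<gamma>: "path_image \<gamma> = path_image g"
    using path_image_shiftpath[OF a01 lp] img_eq by simp
  have w_\<gamma>: "w \<notin> path_image \<gamma>" using w_g img_\<gamma> by simp
  have wn_\<gamma>: "winding_number \<gamma> w = winding_number g w"
  proof -
    have "winding_number (shiftpath a \<gamma>) w = winding_number \<gamma> w"
      by (rule winding_number_shiftpath[OF path_\<gamma> w_\<gamma> lp a01])
    moreover have "winding_number (shiftpath a \<gamma>) w = winding_number g w"
      by (rule winding_number_cong) (use shift_eq in auto)
    ultimately show ?thesis by simp
  qed
  have "frontier D \<noteq> {}" using D_bdry by (auto intro!: exI[of _ 1])
  then obtain d where dD: "d \<in> D" by (metis all_not_in_conv frontier_empty)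
  have img_sub: "path_image \<gamma> \<subseteq> frontier D"
    unfolding D_bdry path_image_def \<gamma>_def by auto
  have d_\<gamma>: "d \<notin> path_image \<gamma>"
  proof
    assume "d \<in> path_image \<gamma>"
    then have "d \<in> frontier D" using img_sub by blast
    then show False using dD D_open by (simp add: frontier_def interior_open)
  qed
  have wn_d: "winding_number \<gamma> d = 1" using orient[OF dD] by (simp add: \<gamma>_def)
  have "winding_number \<gamma> w \<in> {0, 1}" by (rule jordan_part[OF sp lp d_\<gamma> wn_d w_\<gamma>])
  then have "Re (winding_number \<gamma> w) \<ge> 0" by auto
  then show False using Reg wn_\<gamma> by simp
qed

lemma not_all_on_line:
  fixes D :: "complex set"
  assumes D: "open D" "D \<noteq> {}" "bounded D" and nu: "\<nu> \<noteq> 0"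
    and fr: "\<And>x. x \<in> frontier D \<Longrightarrow> (x - p) \<bullet> \<nu> = 0"
  shows False
proof -
  obtain d0 where d0: "d0 \<in> D" using D by auto
  obtain \<epsilon> where eps: "\<epsilon> > 0" "ball d0 \<epsilon> \<subseteq> D" using D(1) d0 openE by blast
  obtain d where dD: "d \<in> D" and dn: "(d - p) \<bullet> \<nu> \<noteq> 0"
  proof (cases "(d0 - p) \<bullet> \<nu> = 0")
    case False
    then show ?thesis using that d0 by blast
  next
    case True
    define d where "d = d0 - (\<epsilon> / (2 * norm \<nu>)) *\<^sub>R \<nu>"
    have "dist d0 d = \<epsilon> / 2" using nu eps by (simp add: d_def dist_norm)
    then have "d \<in> D" using eps by auto
    moreover have "(d - p) \<bullet> \<nu> = (d0 - p) \<bullet> \<nu> - (\<epsilon> / (2 * norm \<nu>)) * (\<nu> \<bullet> \<nu>)"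
      by (simp add: d_def inner_diff_left algebra_simps)
    then have "(d - p) \<bullet> \<nu> \<noteq> 0" using True nu eps by simp
    ultimately show ?thesis using that by blast
  qed
  define \<sigma> where "\<sigma> = sgn ((d - p) \<bullet> \<nu>)"
  have sig: "\<sigma> * ((d - p) \<bullet> \<nu>) > 0" using dn by (simp add: \<sigma>_def sgn_real_def)
  have sig1: "\<bar>\<sigma>\<bar> = 1" using dn by (simp add: \<sigma>_def sgn_real_def)
  obtain M where M: "\<And>x. x \<in> D \<Longrightarrow> norm x \<le> M" using D(3) bounded_iff by blast
  define T where "T = (M + norm d + 1) / norm \<nu>"
  define e where "e = d + (T * \<sigma>) *\<^sub>R \<nu>"
  have Mp: "M + norm d + 1 > 0" using M[OF dD] norm_ge_zero[of d] by linarith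
  then have Tpos: "T \<ge> 0" using nu by (simp add: T_def)
  have "norm ((T * \<sigma>) *\<^sub>R \<nu>) = M + norm d + 1"
    using nu sig1 Tpos Mp by (simp add: T_def abs_mult)
  moreover have "norm ((T * \<sigma>) *\<^sub>R \<nu>) \<le> norm e + norm d"
    by (metis add_diff_cancel_left' e_def norm_triangle_ineq4)
  ultimately have "norm e > M" by linarith
  then have eD: "e \<notin> D" using M by force
  have "closed_segment d e \<inter> frontier D \<noteq> {}"
    by (rule connected_Int_frontier) (use dD eD in auto)
  then obtain q where q: "q \<in> closed_segment d e" "q \<in> frontier D" by blast
  obtain u where u: "0 \<le> u" "u \<le> 1" "q = (1 - u) *\<^sub>R d + u *\<^sub>R e"
    using q(1) unfolding closed_segment_def by auto
  have qp: "q - p = (d - p) + (u * T * \<sigma>) *\<^sub>R \<nu>" by (simp add: u(3) e_def algebra_simps)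
  have "(q - p) \<bullet> \<nu> = (d - p) \<bullet> \<nu> + u * T * \<sigma> * (\<nu> \<bullet> \<nu>)"
    unfolding qp inner_add_left inner_scaleR_left by simp
  then have "\<sigma> * ((q - p) \<bullet> \<nu>) = \<sigma> * ((d - p) \<bullet> \<nu>) + u * T * (\<sigma> * \<sigma>) * (\<nu> \<bullet> \<nu>)"
    by (simp add: algebra_simps)
  moreover have "u * T * (\<sigma> * \<sigma>) * (\<nu> \<bullet> \<nu>) \<ge> 0" using u Tpos by simp
  ultimately have "\<sigma> * ((q - p) \<bullet> \<nu>) > 0" using sig by linarith
  then show False using fr[OF q(2)] by simp
qed

theorem lemma5p3:
  fixes \<Phi> U :: "complex \<Rightarrow> complex"
    and \<Phi>' :: "real \<Rightarrow> complex"
    and DU :: "complex \<Rightarrow> complex \<Rightarrow> complex"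
    and D :: "complex set"
  assumes Phi_C1: "\<And>t. ((\<lambda>t. \<Phi> (cis t)) has_vector_derivative \<Phi>' t) (at t)"
    and Phi'_cont: "continuous_on UNIV \<Phi>'"
    and Phi'_nz: "\<And>t. \<Phi>' t \<noteq> 0"
    and Phi_inj: "inj_on \<Phi> (sphere 0 1)"
    and D_open: "open D" and D_conn: "connected D" and D_bdd: "bounded D"
    and D_bdry: "frontier D = \<Phi> ` sphere 0 1"
    and orient: "\<And>w. w \<in> D \<Longrightarrow> winding_number (\<lambda>t. \<Phi> (cis (2 * pi * t))) w = 1"
    and U_harm_re: "harmonic_on (\<lambda>z. Re (U z)) (ball 0 1)"
    and U_harm_im: "harmonic_on (\<lambda>z. Im (U z)) (ball 0 1)"
    and U_cont: "continuous_on (cball 0 1) U"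
    and U_bdry: "\<And>z. z \<in> sphere 0 1 \<Longrightarrow> U z = \<Phi> z"
    and U_C1: "\<And>z. z \<in> cball 0 1 \<Longrightarrow> (U has_derivative DU z) (at z within cball 0 1)"
    and DU_cont: "\<And>v. continuous_on (cball 0 1) (\<lambda>z. DU z v)"
  shows "\<forall>z \<in> sphere 0 1. \<Phi> z \<in> convex_part D \<longrightarrow> jac_det (DU z) > 0"
proof (intro ballI impI)
  fix z0 assume z0: "z0 \<in> sphere 0 1" and cp: "\<Phi> z0 \<in> convex_part D"
  define p where "p = \<Phi> z0"
  have nz0: "norm z0 = 1" using z0 by simp
  have z0c: "z0 \<in> cball 0 1" using z0 by simp
  have Dne: "D \<noteq> {}"
  proof
    assume "D = {}"
    then have "frontier D = {}" by simp
    moreover have "\<Phi> 1 \<in> \<Phi> ` sphere 0 1" by simp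
    ultimately show False using D_bdry by simp
  qed
  define S where "S = convex hull D"
  have pS: "p \<in> frontier S" using cp by (simp add: convex_part_def p_def S_def)
  have DS: "D \<subseteq> interior S"
    by (rule interior_maximal) (auto simp: S_def hull_subset D_open)
  have intS: "interior S \<noteq> {}" using DS Dne by auto
  have riS: "rel_interior S = interior S" by (rule rel_interior_nonempty_interior[OF intS])
  have pcl: "p \<in> closure S" "p \<notin> rel_interior S" using pS riS by (auto simp: frontier_def)
  obtain a where a0: "a \<noteq> 0" and asupp: "\<And>y. y \<in> closure S \<Longrightarrow> a \<bullet> p \<le> a \<bullet> y"
  proof -
    have convS: "convex S" by (simp add: S_def convex_convex_hull)
    show ?thesis by (rule supporting_hyperplane_relative_frontier[OF convS pcl]) (rule that)
  qed
  define \<nu> where "\<nu> = (- 1 / norm a) *\<^sub>R a"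
  have nu: "norm \<nu> = 1" using a0 by (simp add: \<nu>_def)
  have nu0: "\<nu> \<noteq> 0" using nu by auto
  have supp_cl: "(y - p) \<bullet> \<nu> \<le> 0" if "y \<in> closure S" for y
  proof -
    have e1: "(y - p) \<bullet> a = a \<bullet> y - a \<bullet> p" by (simp add: inner_diff_left inner_diff_right inner_commute)
    have "(y - p) \<bullet> \<nu> = (- 1 / norm a) * (a \<bullet> y - a \<bullet> p)"
      unfolding \<nu>_def inner_scaleR_right e1 ..
    moreover have "(1 / norm a) * (a \<bullet> y - a \<bullet> p) \<ge> 0" using asupp[OF that] a0 by simp
    ultimately show ?thesis by simp
  qed
  have fr_cl: "frontier D \<subseteq> closure S"
    using closure_mono[OF hull_subset[of D convex]] by (auto simp: S_def frontier_def)
  have supp: "(\<Phi> x - p) \<bullet> \<nu> \<le> 0" if "x \<in> sphere 0 1" for x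
    using supp_cl fr_cl D_bdry that by blast
  define h where "h = (\<lambda>z. (U z - p) \<bullet> \<nu>)"
  have h_eq: "h = (\<lambda>z. Re \<nu> * Re (U z) + Im \<nu> * Im (U z) + (- (p \<bullet> \<nu>)))"
    by (auto simp: h_def inner_complex_def algebra_simps fun_eq_iff)
  have hharm: "harmonic_on h (ball 0 1)"
    unfolding h_eq by (rule harmonic_lin[OF U_harm_re U_harm_im])
  then obtain h' h'' where hd1: "\<And>z. z \<in> ball 0 1 \<Longrightarrow> (h has_derivative h' z) (at z)"
    and hd2: "\<And>z e. z \<in> ball 0 1 \<Longrightarrow> ((\<lambda>w. h' w e) has_derivative h'' z e) (at z)"
    and hlap: "\<And>z. z \<in> ball 0 1 \<Longrightarrow> h'' z 1 1 + h'' z \<i> \<i> = 0"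
    unfolding harmonic_on_def by blast
  have hlap': "h'' z 1 1 + h'' z \<i> \<i> \<ge> 0" if "z \<in> ball 0 1" for z using hlap[OF that] by simp
  have hc: "continuous_on (cball 0 1) h" unfolding h_def by (intro continuous_intros U_cont)
  have hsph: "h z \<le> 0" if "z \<in> sphere 0 1" for z using supp[OF that] U_bdry[OF that] by (simp add: h_def)
  have hle: "h z \<le> 0" if "z \<in> cball 0 1" for z
    by (rule weak_max[of 1 0 h h' h'']) (use hc hd1 hd2 hlap' hsph that in auto)
  have hz0: "h z0 = 0" using U_bdry[OF z0] by (simp add: h_def p_def)
  have "\<exists>\<zeta>\<in>sphere 0 1. h \<zeta> < 0"
  proof (rule ccontr)
    assume na: "\<not> (\<exists>\<zeta>\<in>sphere 0 1. h \<zeta> < 0)"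
    have all0: "h \<zeta> = 0" if "\<zeta> \<in> sphere 0 1" for \<zeta>
    proof -
      have "\<not> h \<zeta> < 0" using na that by blast
      then show ?thesis using hsph[OF that] by linarith
    qed
    have "(x - p) \<bullet> \<nu> = 0" if xf: "x \<in> frontier D" for x
    proof -
      have "x \<in> \<Phi> ` sphere 0 1" using xf D_bdry by simp
      then obtain z where z: "z \<in> sphere 0 1" "x = \<Phi> z" by blast
      then show ?thesis using all0[OF z(1)] U_bdry[OF z(1)] by (simp add: h_def)
    qed
    then show False by (rule not_all_on_line[OF D_open Dne D_bdd nu0])
  qed
  then obtain \<zeta> where zeta: "\<zeta> \<in> sphere 0 1" "h \<zeta> < 0" by blast
  have hneg: "h x < 0" if "x \<in> ball 0 1" for x
    by (rule strong_max[of h h' h'' \<zeta> x]) (use hc hd1 hd2 hlap' hle zeta that in auto)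
  obtain \<delta> where dl: "\<delta> > 0" "\<And>t. 0 < t \<and> t \<le> 1/10 \<Longrightarrow> h (z0 + t *\<^sub>R (0 - z0)) \<le> - \<delta> * t"
  proof -
    have "\<exists>\<delta>>0. \<forall>t. 0 < t \<and> t \<le> 1/10 \<longrightarrow> h (z0 + t *\<^sub>R (0 - z0)) \<le> - \<delta> * t"
      by (rule hopf[of 1 0 h h' h'']) (use hc hd1 hd2 hlap' hneg hsph z0 in auto)
    then show ?thesis using that by blast
  qed
  have linD: "linear (DU z0)" using U_C1[OF z0c] has_derivative_linear by blast
  have hDall: "(h has_derivative (\<lambda>v. DU x v \<bullet> \<nu>)) (at x within cball 0 1)" if "x \<in> cball 0 1" for x
    unfolding h_def using U_C1[OF that] by (auto intro!: derivative_eq_intros)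
  define gg where "gg = (\<lambda>t::real. h (z0 + t *\<^sub>R (0 - z0)))"
  have ggd: "(gg has_real_derivative (DU z0 (- z0) \<bullet> \<nu>)) (at 0 within {0..1})"
  proof -
    have fd: "((\<lambda>t::real. z0 + t *\<^sub>R (0 - z0)) has_derivative (\<lambda>t. t *\<^sub>R (0 - z0))) (at 0 within {0..1})"
      by (auto intro!: derivative_eq_intros)
    have img: "(\<lambda>t::real. z0 + t *\<^sub>R (0 - z0)) ` {0..1} \<subseteq> cball 0 1"
    proof
      fix y assume "y \<in> (\<lambda>t::real. z0 + t *\<^sub>R (0 - z0)) ` {0..1}"
      then obtain t :: real where t: "0 \<le> t" "t \<le> 1" "y = z0 + t *\<^sub>R (0 - z0)" by auto
      have "y = (1 - t) *\<^sub>R z0" using t by (simp add: algebra_simps)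
      then have "norm y = (1 - t)" using t nz0 by simp
      then show "y \<in> cball 0 1" using t by simp
    qed
    have "(gg has_derivative (\<lambda>t. DU z0 (t *\<^sub>R (0 - z0)) \<bullet> \<nu>)) (at 0 within {0..1})"
      unfolding gg_def
      using has_derivative_in_compose2[of "cball 0 1" h "\<lambda>z v. DU z v \<bullet> \<nu>", OF hDall img _ fd] by simp
    moreover have "(\<lambda>t. DU z0 (t *\<^sub>R (0 - z0)) \<bullet> \<nu>) = (*) (DU z0 (- z0) \<bullet> \<nu>)"
    proof
      fix t :: real
      have "t *\<^sub>R (0 - z0) = t *\<^sub>R (- z0)" by simp
      then have "DU z0 (t *\<^sub>R (0 - z0)) = t *\<^sub>R DU z0 (- z0)" using linear_scale[OF linD] by metis
      then show "DU z0 (t *\<^sub>R (0 - z0)) \<bullet> \<nu> = (DU z0 (- z0) \<bullet> \<nu>) * t" by (simp add: mult.commute)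
    qed
    ultimately show ?thesis by (simp add: has_field_derivative_def)
  qed
  have "DU z0 (- z0) \<bullet> \<nu> \<le> - \<delta>"
    by (rule deriv_from_bound[OF ggd, where \<tau>="1/10"]) (use dl hz0 in \<open>auto simp: gg_def\<close>)
  then have rad: "DU z0 z0 \<bullet> \<nu> \<ge> \<delta>" using linear_neg[OF linD, of z0] by simp
  define t0 where "t0 = Arg z0"
  have z0ne: "z0 \<noteq> 0" using nz0 by auto
  have z0cis: "cis t0 = z0" using cis_Arg[OF z0ne] nz0 by (simp add: t0_def sgn_div_norm)
  have t0b: "- pi < t0" "t0 \<le> pi" using Arg_bounded[of z0] by (simp_all add: t0_def)
  have cisd: "(cis has_derivative (\<lambda>y. y *\<^sub>R (\<i> * cis t0))) (at t0 within UNIV)"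
    using has_derivative_cis[OF has_derivative_ident, of t0 UNIV] by simp
  have cis_img: "cis ` UNIV \<subseteq> cball 0 1" by auto
  have Ud: "((\<lambda>t. U (cis t)) has_derivative (\<lambda>y. DU (cis t0) (y *\<^sub>R (\<i> * cis t0)))) (at t0 within UNIV)"
    by (rule has_derivative_in_compose2[of "cball 0 1" U DU cis UNIV t0, OF U_C1 cis_img _ cisd]) auto
  have eqf: "(\<lambda>t. U (cis t)) = (\<lambda>t. \<Phi> (cis t))" using U_bdry by (auto simp: fun_eq_iff)
  have Pd: "((\<lambda>t. \<Phi> (cis t)) has_derivative (\<lambda>y. y *\<^sub>R \<Phi>' t0)) (at t0)"
    using Phi_C1[of t0] by (simp add: has_vector_derivative_def)
  have "(\<lambda>y. DU z0 (y *\<^sub>R (\<i> * z0))) = (\<lambda>y. y *\<^sub>R \<Phi>' t0)"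
    using has_derivative_unique[OF Pd] Ud eqf z0cis by simp
  then have tangU: "DU z0 (\<i> * z0) = \<Phi>' t0" by (metis scaleR_one)
  define g2 where "g2 = (\<lambda>t. (\<Phi> (cis t) - p) \<bullet> \<nu>)"
  have g2d0: "(g2 has_derivative (\<lambda>y. (y *\<^sub>R \<Phi>' t0) \<bullet> \<nu>)) (at t0)"
    unfolding g2_def using Pd by (auto intro!: derivative_eq_intros)
  have "(\<lambda>y. (y *\<^sub>R \<Phi>' t0) \<bullet> \<nu>) = (*) (\<Phi>' t0 \<bullet> \<nu>)" by (auto simp: fun_eq_iff)
  then have g2d: "(g2 has_real_derivative (\<Phi>' t0 \<bullet> \<nu>)) (at t0)"
    using g2d0 by (simp add: has_field_derivative_def)
  have bnu: "\<Phi>' t0 \<bullet> \<nu> = 0"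
  proof (rule DERIV_local_max[OF g2d zero_less_one], intro allI impI)
    fix y :: real
    have "g2 t0 = 0" by (simp add: g2_def z0cis p_def)
    moreover have "g2 y \<le> 0" unfolding g2_def by (rule supp) simp
    ultimately show "g2 y \<le> g2 t0" by simp
  qed
  define b where "b = \<Phi>' t0"
  define k where "k = Im (b * cnj \<nu>)"
  have Reb: "Re (b * cnj \<nu>) = 0" using bnu by (simp add: b_def inner_complex_def)
  have cnjnu: "cnj \<nu> * \<nu> = 1"
  proof -
    have "complex_of_real ((norm \<nu>)\<^sup>2) = \<nu> * cnj \<nu>" by (rule complex_norm_square)
    then show ?thesis using nu by (simp add: mult.commute)
  qed
  have bc: "b * cnj \<nu> = \<i> * complex_of_real k" using Reb by (simp add: complex_eq_iff k_def)
  have "b = (b * cnj \<nu>) * \<nu>" using cnjnu by (simp add: mult.assoc)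
  then have bk: "b = complex_of_real k * (\<i> * \<nu>)" unfolding bc by (simp add: algebra_simps)
  have k0: "k \<noteq> 0" using bk Phi'_nz[of t0] by (auto simp: b_def)
  have kpos: "k > 0"
  proof (rule ccontr)
    assume "\<not> k > 0"
    then have kneg: "k < 0" using k0 by simp
    have supp2: "(\<Phi> x - \<Phi> (cis t0)) \<bullet> \<nu> \<le> 0" if "x \<in> sphere 0 1" for x
      using supp[OF that] by (simp add: z0cis p_def)
    have tang: "\<Phi>' t0 = complex_of_real k * (\<i> * \<nu>)" using bk unfolding b_def .
    show False
      by (rule orientation[OF Phi_C1 Phi'_cont Phi_inj D_open D_bdry orient t0b nu supp2 tang kneg])
  qed
  define aa where "aa = DU z0 z0"
  have aapos: "aa \<bullet> \<nu> > 0" using rad dl by (simp add: aa_def)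
  have xy: "(Re z0)\<^sup>2 + (Im z0)\<^sup>2 = 1" using nz0 by (simp add: cmod_power2[symmetric])
  have one: "(1::complex) = Re z0 *\<^sub>R z0 + (- Im z0) *\<^sub>R (\<i> * z0)"
    using xy by (simp add: complex_eq_iff power2_eq_square algebra_simps)
  have ii: "\<i> = Im z0 *\<^sub>R z0 + Re z0 *\<^sub>R (\<i> * z0)"
    using xy by (simp add: complex_eq_iff power2_eq_square algebra_simps)
  have L1: "DU z0 1 = Re z0 *\<^sub>R aa + (- Im z0) *\<^sub>R b"
    by (subst one) (simp add: linear_add[OF linD] linear_diff[OF linD] linear_scale[OF linD] aa_def b_def tangU)
  have Li: "DU z0 \<i> = Im z0 *\<^sub>R aa + Re z0 *\<^sub>R b"
    by (subst ii) (simp add: linear_add[OF linD] linear_scale[OF linD] aa_def b_def tangU)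
  have "jac_det (DU z0) = ((Re z0)\<^sup>2 + (Im z0)\<^sup>2) * (Re aa * Im b - Im aa * Re b)"
    unfolding jac_det_def L1 Li by (simp add: power2_eq_square algebra_simps)
  also have "\<dots> = Re aa * Im b - Im aa * Re b" using xy by simp
  also have "\<dots> = k * (aa \<bullet> \<nu>)" by (simp add: bk inner_complex_def algebra_simps)
  finally show "jac_det (DU z0) > 0" using kpos aapos by simp
qed

end
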